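(* Let $(V,b)$ be an alternating bilinear $K[u]$-module, not necessarily non-degenerate, and let $d>0$. The following are equivalent: (i) $b(X^{d-1}v,v)\ne0$ for some $v\in V$ with $X^dv=0$; (ii) $d$ is even and $V=W\perp W'$ for some $K[u]$-submodules $W,W'$ with $(W,b)\cong V(d)$; (iii) $d$ is even and for every decomposition $V=W_1\perp\cdots\perp W_t$ into orthogonally indecomposable $K[u]$-submodules, some $(W_i,b)$ is isomorphic to $V(d)$.
   Context: $K$ is algebraically closed of characteristic 2, $u$ a generator of a cyclic $2$-group, $X=u-1$. A bilinear $K[u]$-module is a $K[u]$-module with a $u$-invariant bilinear form; $V=W\perp W'$ means $V=W\oplus W'$ with $b(W,W')=0$. A bilinear module is orthogonally indecomposable if it is nonzero and admits no such decomposition with both summands nonzero. For $d=2m$ even, $V(d)$ is $V_d$ (the $d$-dimensional indecomposable $K[u]$-module) with basis $e_1,\dots,e_d$ such that $ue_1=e_1$, $ue_i=e_i+\cdots+e_1$ for $2\le i\le m+1$, $ue_i=e_i+e_{i-1}$ for $m+1<i\le d$, and form $b(e_i,e_j)=1$ if $i+j=d+1$, $0$ otherwise. *)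

theory Defs
  imports "HOL-Analysis.Analysis" "HOL-Computational_Algebra.Polynomial"
begin

text \<open>Setting: the ambient space is 'k^'n; the group generator u acts by the matrix U,
  the bilinear form is b(x,y) = x^T B y. The K[u]-module V is a U-invariant subspace.\<close>

definition bil :: "'k::field^'n^'n \<Rightarrow> 'k^'n \<Rightarrow> 'k^'n \<Rightarrow> 'k" where
  "bil B x y = (\<Sum>i\<in>UNIV. x $ i * (B *v y) $ i)"

definition Xpow :: "'k::field^'n^'n \<Rightarrow> nat \<Rightarrow> 'k^'n \<Rightarrow> 'k^'n" where
  "Xpow U d = ((\<lambda>w. U *v w - w) ^^ d)"

definition submod :: "'k::field^'n^'n \<Rightarrow> ('k^'n) set \<Rightarrow> bool" where
  "submod U W \<longleftrightarrow> vec.subspace W \<and> (\<forall>w\<in>W. U *v w \<in> W)"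

definition perp2 :: "'k::field^'n^'n \<Rightarrow> 'k^'n^'n \<Rightarrow> ('k^'n) set \<Rightarrow> ('k^'n) set \<Rightarrow> ('k^'n) set \<Rightarrow> bool" where
  "perp2 U B V W W' \<longleftrightarrow> submod U W \<and> submod U W' \<and> W \<inter> W' = {0}
     \<and> {w + w' | w w'. w \<in> W \<and> w' \<in> W'} = V
     \<and> (\<forall>w\<in>W. \<forall>w'\<in>W'. bil B w w' = 0)"

definition orth_indec :: "'k::field^'n^'n \<Rightarrow> 'k^'n^'n \<Rightarrow> ('k^'n) set \<Rightarrow> bool" where
  "orth_indec U B W \<longleftrightarrow> W \<noteq> {0} \<and>
     \<not> (\<exists>A C. perp2 U B W A C \<and> A \<noteq> {0} \<and> C \<noteq> {0})"

definition perp_fam :: "'k::field^'n^'n \<Rightarrow> 'k^'n^'n \<Rightarrow> ('k^'n) set \<Rightarrow> nat \<Rightarrow> (nat \<Rightarrow> ('k^'n) set) \<Rightarrow> bool" where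
  "perp_fam U B V t Ws \<longleftrightarrow>
     (\<forall>i<t. submod U (Ws i) \<and> Ws i \<subseteq> V)
   \<and> (\<forall>i<t. \<forall>j<t. i \<noteq> j \<longrightarrow> (\<forall>x\<in>Ws i. \<forall>y\<in>Ws j. bil B x y = 0))
   \<and> (\<forall>v\<in>V. \<exists>!w. (\<forall>i<t. w i \<in> Ws i) \<and> (\<forall>i. t \<le> i \<longrightarrow> w i = 0) \<and> v = (\<Sum>i<t. w i))"

text \<open>(W, b) is isomorphic to V(d) (d = 2m): W has a basis e_1,...,e_d on which u and b
  act exactly as on the standard basis of V(d).\<close>
definition isVd :: "'k::field^'n^'n \<Rightarrow> 'k^'n^'n \<Rightarrow> ('k^'n) set \<Rightarrow> nat \<Rightarrow> bool" where
  "isVd U B W d \<longleftrightarrow> (\<exists>e :: nat \<Rightarrow> 'k^'n.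
     inj_on e {1..d} \<and> vec.independent (e ` {1..d}) \<and> vec.span (e ` {1..d}) = W
     \<and> U *v e 1 = e 1
     \<and> (\<forall>i. 2 \<le> i \<and> i \<le> d div 2 + 1 \<longrightarrow> U *v e i = (\<Sum>j=1..i. e j))
     \<and> (\<forall>i. d div 2 + 1 < i \<and> i \<le> d \<longrightarrow> U *v e i = e i + e (i - 1))
     \<and> (\<forall>i\<in>{1..d}. \<forall>j\<in>{1..d}. bil B (e i) (e j) = (if i + j = d + 1 then 1 else 0)))"

end

theory Submission
  imports Defs
begin

lemma bil_add1: "bil B (x + y) z = bil B x z + bil B y z"
  by (simp add: bil_def sum.distrib distrib_right)
lemma bil_add2: "bil B x (y + z) = bil B x y + bil B x z"
  by (simp add: bil_def matrix_vector_right_distrib sum.distrib distrib_left)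
lemma bil_scale1: "bil B (c *s x) y = c * bil B x y"
  by (simp add: bil_def sum_distrib_left mult.assoc)
lemma bil_scale2: "bil B x (c *s y) = c * bil B x y"
  by (simp add: bil_def vector_scalar_commute sum_distrib_left mult.left_commute)
lemma bil_zero1[simp]: "bil B 0 y = 0"
  by (simp add: bil_def)
lemma bil_zero2[simp]: "bil B x 0 = 0"
  by (simp add: bil_def)
lemma bil_neg1: "bil B (- x) y = - bil B x y"
  by (simp add: bil_def sum_negf)
lemma bil_neg2: "bil B x (- y) = - bil B x y"
  by (simp add: bil_def matrix_vector_mult_diff_distrib[of B 0 y, simplified] sum_negf)
lemma bil_diff1: "bil B (x - y) z = bil B x z - bil B y z"
  using bil_add1[of B x "-y" z] bil_neg1[of B y z] by simp
lemma bil_diff2: "bil B x (y - z) = bil B x y - bil B x z"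
  using bil_add2[of B x y "-z"] bil_neg2[of B x z] by simp
lemma bil_sum1: "bil B (\<Sum>i\<in>I. f i) y = (\<Sum>i\<in>I. bil B (f i) y)"
  by (induction I rule: infinite_finite_induct) (simp_all add: bil_add1)
lemma bil_sum2: "bil B x (\<Sum>i\<in>I. f i) = (\<Sum>i\<in>I. bil B x (f i))"
  by (induction I rule: infinite_finite_induct) (simp_all add: bil_add2)

definition Uit :: "'k::field^'n^'n \<Rightarrow> nat \<Rightarrow> 'k^'n \<Rightarrow> 'k^'n" where
  "Uit U r = ((*v) U) ^^ r"

lemma Uit_0[simp]: "Uit U 0 w = w" by (simp add: Uit_def)
lemma Uit_Suc: "Uit U (Suc r) w = U *v Uit U r w" by (simp add: Uit_def)
lemma Uit_Suc': "Uit U (Suc r) w = Uit U r (U *v w)" by (simp add: Uit_def funpow_Suc_right del: funpow.simps)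
lemma Uit_plus: "Uit U (a + b) w = Uit U a (Uit U b w)" by (simp add: Uit_def funpow_add)
lemma Uit_add: "Uit U r (x + y) = Uit U r x + Uit U r y"
  by (induction r) (simp_all add: Uit_Suc matrix_vector_right_distrib)
lemma Uit_scale: "Uit U r (c *s x) = c *s Uit U r x"
  by (induction r) (simp_all add: Uit_Suc vector_scalar_commute)
lemma Uit_zero[simp]: "Uit U r 0 = 0"
  by (induction r) (simp_all add: Uit_Suc)
lemma Uit_diff: "Uit U r (x - y) = Uit U r x - Uit U r y"
  by (induction r) (simp_all add: Uit_Suc matrix_vector_mult_diff_distrib)
lemma Uit_sum: "Uit U r (\<Sum>i\<in>I. f i) = (\<Sum>i\<in>I. Uit U r (f i))"
  by (induction I rule: infinite_finite_induct) (simp_all add: Uit_add)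

lemma Xpow_0[simp]: "Xpow U 0 w = w" by (simp add: Xpow_def)
lemma Xpow_Suc: "Xpow U (Suc k) w = U *v Xpow U k w - Xpow U k w" by (simp add: Xpow_def)
lemma Xpow_Suc': "Xpow U (Suc k) w = Xpow U k (U *v w - w)"
  by (simp add: Xpow_def funpow_Suc_right del: funpow.simps)
lemma Xpow_plus: "Xpow U (a + b) w = Xpow U a (Xpow U b w)" by (simp add: Xpow_def funpow_add)
lemma Xpow_add: "Xpow U k (x + y) = Xpow U k x + Xpow U k y"
  by (induction k) (simp_all add: Xpow_Suc matrix_vector_right_distrib)
lemma Xpow_scale: "Xpow U k (c *s x) = c *s Xpow U k x"
  by (induction k) (simp_all add: Xpow_Suc vector_scalar_commute scalar_mult_eq_scaleR vector_ssub_ldistrib)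
lemma Xpow_zero[simp]: "Xpow U k 0 = 0"
  by (induction k) (simp_all add: Xpow_Suc)
lemma Xpow_diff: "Xpow U k (x - y) = Xpow U k x - Xpow U k y"
  by (induction k) (simp_all add: Xpow_Suc matrix_vector_mult_diff_distrib)
lemma Xpow_sum: "Xpow U k (\<Sum>i\<in>I. f i) = (\<Sum>i\<in>I. Xpow U k (f i))"
  by (induction I rule: infinite_finite_induct) (simp_all add: Xpow_add)

lemma U_Xpow: "U *v Xpow U k w = Xpow U k (U *v w)"
  by (induction k) (simp_all add: Xpow_Suc matrix_vector_mult_diff_distrib)
lemma Uit_Xpow: "Uit U r (Xpow U k w) = Xpow U k (Uit U r w)"
  by (induction r) (simp_all add: Uit_Suc U_Xpow)
lemma Uit_U: "Uit U r (U *v w) = U *v Uit U r w"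
  by (simp add: Uit_Suc[symmetric] Uit_Suc')

lemma char2_two: assumes "CHAR('k::field) = 2" shows "(2::'k) = 0"
  using of_nat_CHAR[where 'a='k] assms by simp
lemma char2_neg: assumes "CHAR('k::field) = 2" shows "- (a::'k) = a"
proof -
  have "a + a = 2 * a" by simp
  also have "\<dots> = 0" using char2_two[OF assms] by simp
  finally show ?thesis by (simp add: add_eq_0_iff)
qed
lemma char2_minus: assumes "CHAR('k::field) = 2" shows "(a::'k) - b = a + b"
  using char2_neg[OF assms, of b] by (metis diff_minus_eq_add)
lemma char2_vneg: assumes "CHAR('k::field) = 2" shows "- (x::'k^'n) = x"
  by (simp add: vec_eq_iff char2_neg[OF assms])
lemma char2_vminus: assumes "CHAR('k::field) = 2" shows "(x::'k^'n) - y = x + y"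
  using char2_vneg[OF assms, of y] by (metis diff_minus_eq_add)
lemma char2_vdouble: assumes "CHAR('k::field) = 2" shows "(x::'k^'n) + x = 0"
  using char2_vminus[OF assms, of x x] by simp
lemma char2_double: assumes "CHAR('k::field) = 2" shows "(a::'k) + a = 0"
  using char2_minus[OF assms, of a a] by simp

definition Top :: "'k::field^'n^'n \<Rightarrow> nat \<Rightarrow> nat \<Rightarrow> 'k^'n \<Rightarrow> 'k^'n" where
  "Top U p r w = Xpow U p (Uit U r w)"

lemma Top_add: "Top U p r (x + y) = Top U p r x + Top U p r y"
  by (simp add: Top_def Uit_add Xpow_add)
lemma Top_scale: "Top U p r (c *s x) = c *s Top U p r x"
  by (simp add: Top_def Uit_scale Xpow_scale)
lemma Top_sum: "Top U p r (\<Sum>i\<in>I. f i) = (\<Sum>i\<in>I. Top U p r (f i))"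
  by (simp add: Top_def Uit_sum Xpow_sum)
lemma Top_Top: "Top U p r (Top U p' r' w) = Top U (p + p') (r + r') w"
  by (simp add: Top_def Uit_Xpow Xpow_plus Uit_plus)
lemma Top_00[simp]: "Top U 0 0 w = w" by (simp add: Top_def)

locale ctx =
  fixes U B :: "'k::alg_closed_field^'n^'n" and V :: "('k^'n) set" and N :: nat
  assumes char2: "CHAR('k) = 2" and Vsub: "vec.subspace V"
    and Vinv: "\<And>w. w \<in> V \<Longrightarrow> U *v w \<in> V"
    and Nper: "\<And>w. w \<in> V \<Longrightarrow> Uit U N w = w" and Npos: "N > 0"
    and binv: "\<And>x y. x \<in> V \<Longrightarrow> y \<in> V \<Longrightarrow> bil B (U *v x) (U *v y) = bil B x y"
    and balt: "\<And>v. v \<in> V \<Longrightarrow> bil B v v = 0"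
begin

lemma V0: "0 \<in> V" using Vsub vec.subspace_0 by blast
lemma Vadd: "x \<in> V \<Longrightarrow> y \<in> V \<Longrightarrow> x + y \<in> V" using Vsub vec.subspace_add by blast
lemma Vdiff: "x \<in> V \<Longrightarrow> y \<in> V \<Longrightarrow> x - y \<in> V" using Vsub vec.subspace_diff by blast
lemma Vscale: "x \<in> V \<Longrightarrow> c *s x \<in> V" using Vsub vec.subspace_scale by blast
lemma Vsum: "(\<And>i. i \<in> I \<Longrightarrow> f i \<in> V) \<Longrightarrow> (\<Sum>i\<in>I. f i) \<in> V"
  using Vsub vec.subspace_sum by blast
lemma VUit: "w \<in> V \<Longrightarrow> Uit U r w \<in> V"
  by (induction r) (simp_all add: Uit_Suc Vinv)
lemma VXpow: "w \<in> V \<Longrightarrow> Xpow U k w \<in> V"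
  by (induction k) (simp_all add: Xpow_Suc Vinv Vdiff)
lemma VTop: "w \<in> V \<Longrightarrow> Top U p r w \<in> V"
  by (simp add: Top_def VUit VXpow)

lemma Uit_Nq: "w \<in> V \<Longrightarrow> Uit U (N * q) w = w"
proof (induction q)
  case (Suc q)
  have "Uit U (N * Suc q) w = Uit U N (Uit U (N * q) w)"
    by (simp add: Uit_plus[symmetric])
  then show ?case using Suc by (simp add: Nper)
qed simp

lemma Uit_N: "w \<in> V \<Longrightarrow> Uit U (r + N * q) w = Uit U r w"
  by (simp add: Uit_plus Uit_Nq)

lemma Top_N: "w \<in> V \<Longrightarrow> Top U p (r + N * q) w = Top U p r w"
  by (simp add: Top_def Uit_N)

lemma bil_Uit: "x \<in> V \<Longrightarrow> y \<in> V \<Longrightarrow> bil B (Uit U r x) (Uit U r y) = bil B x y"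
  by (induction r) (simp_all add: Uit_Suc binv VUit)

lemma adjU: assumes "x \<in> V" "y \<in> V"
  shows "bil B (Uit U r x) y = bil B x (Uit U ((N - 1) * r) y)"
proof -
  have e: "r + (N - 1) * r = 0 + N * r" using Npos
    by (metis Suc_diff_1 add.commute add_0 mult.commute mult_Suc_right)
  have "bil B x (Uit U ((N - 1) * r) y) = bil B (Uit U r x) (Uit U r (Uit U ((N - 1) * r) y))"
    using assms by (simp add: bil_Uit VUit)
  also have "\<dots> = bil B (Uit U r x) (Uit U (0 + N * r) y)"
    by (simp only: Uit_plus[symmetric] e)
  also have "\<dots> = bil B (Uit U r x) y" using assms by (simp only: Uit_N) simp
  finally show ?thesis by simp
qed

lemma X1: "Xpow U 1 w = U *v w - w" by (simp add: Xpow_Suc)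
lemma X1': "Xpow U (Suc 0) w = U *v w - w" by (simp add: Xpow_Suc)

lemma XY: assumes "y \<in> V" shows "Xpow U 1 (Uit U (N - 1) y) = y - Uit U (N - 1) y"
proof -
  have "U *v Uit U (N - 1) y = Uit U N y" using Npos
    by (metis Suc_diff_1 Uit_Suc)
  then show ?thesis using assms by (simp add: X1' Nper)
qed

lemma Y_eq: assumes "y \<in> V" shows "Uit U (N - 1) y = y + Xpow U 1 (Uit U (N - 1) y)"
  using XY[OF assms] char2_vminus[OF char2] by (metis add_diff_cancel_left' char2_vminus char2 diff_add_cancel)

lemma adjX1: assumes "x \<in> V" "y \<in> V"
  shows "bil B (Xpow U 1 x) y = bil B x (Xpow U 1 (Uit U (N - 1) y))"
proof -
  have "bil B (Xpow U 1 x) y = bil B (U *v x) y - bil B x y" by (simp add: X1' bil_diff1)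
  also have "bil B (U *v x) y = bil B x (Uit U (N - 1) y)"
    using adjU[OF assms, of 1] by (simp add: Uit_Suc)
  finally have "bil B (Xpow U 1 x) y = bil B x (Uit U (N - 1) y) - bil B x y" .
  also have "\<dots> = bil B x y - bil B x (Uit U (N - 1) y)"
    by (simp add: char2_minus[OF char2] add.commute)
  also have "\<dots> = bil B x (Xpow U 1 (Uit U (N - 1) y))"
    using XY[OF assms(2)] by (simp add: bil_diff2)
  finally show ?thesis .
qed

lemma adjXp: assumes "x \<in> V" "y \<in> V"
  shows "bil B (Xpow U p x) y = bil B x (Xpow U p (Uit U ((N - 1) * p) y))"
  using assms(1)
proof (induction p arbitrary: x)
  case 0 then show ?case by simp
next
  case (Suc p)
  have "bil B (Xpow U (Suc p) x) y = bil B (Xpow U p (Xpow U 1 x)) y"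
    by (simp add: Xpow_plus[symmetric])
  also have "\<dots> = bil B (Xpow U 1 x) (Xpow U p (Uit U ((N - 1) * p) y))"
    using Suc VXpow by blast
  also have "\<dots> = bil B x (Xpow U 1 (Uit U (N - 1) (Xpow U p (Uit U ((N - 1) * p) y))))"
    using adjX1 Suc.prems assms(2) VXpow VUit by blast
  also have "Xpow U 1 (Uit U (N - 1) (Xpow U p (Uit U ((N - 1) * p) y)))
      = Xpow U (Suc p) (Uit U ((N - 1) * Suc p) y)"
    by (simp add: Uit_Xpow Xpow_plus[symmetric] Uit_plus[symmetric] add.commute)
  finally show ?case .
qed

lemma adjT: assumes "x \<in> V" "y \<in> V"
  shows "bil B (Top U p r x) y = bil B x (Top U p ((N - 1) * (p + r)) y)"
proof -
  have "bil B (Top U p r x) y = bil B (Uit U r x) (Xpow U p (Uit U ((N - 1) * p) y))"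
    unfolding Top_def using adjXp assms VUit by blast
  also have "\<dots> = bil B x (Uit U ((N - 1) * r) (Xpow U p (Uit U ((N - 1) * p) y)))"
    using adjU assms VUit VXpow by blast
  also have "\<dots> = bil B x (Xpow U p (Uit U ((N - 1) * r + (N - 1) * p) y))"
    by (simp add: Uit_Xpow Uit_plus)
  also have "(N - 1) * r + (N - 1) * p = (N - 1) * (p + r)"
    by (simp add: distrib_left)
  also have "bil B x (Xpow U p (Uit U ((N - 1) * (p + r)) y)) = bil B x (Top U p ((N - 1) * (p + r)) y)"
    by (simp add: Top_def)
  finally show ?thesis .
qed

lemma GL: assumes "x \<in> V" "z \<in> V"
  shows "bil B (Top U p r x) (Top U p' r' z) = bil B x (Top U (p + p') ((N - 1) * (p + r) + r') z)"
  using adjT[OF assms(1) VTop[OF assms(2)]] by (simp add: Top_Top)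

lemma bsym: assumes "x \<in> V" "y \<in> V" shows "bil B x y = bil B y x"
proof -
  have "0 = bil B (x + y) (x + y)" using balt Vadd assms by simp
  also have "\<dots> = bil B x y + bil B y x" using balt assms by (simp add: bil_add1 bil_add2)
  finally have "bil B x y = - bil B y x" by (simp add: eq_neg_iff_add_eq_0)
  then show ?thesis by (simp add: char2_neg[OF char2])
qed

definition PsiY :: "'k^'n \<Rightarrow> nat \<Rightarrow> nat \<Rightarrow> 'k" where
  "PsiY f i l = bil B f (Top U i ((N - 1) * l) f)"

lemma R1: assumes "f \<in> V"
  shows "PsiY f i (Suc l) = PsiY f i l + PsiY f (Suc i) (Suc l)"
proof -
  define y where "y = Uit U ((N - 1) * l) f"
  have yV: "y \<in> V" using assms by (simp add: y_def VUit)
  have "Top U i ((N - 1) * Suc l) f = Xpow U i (Uit U (N - 1) y)"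
    by (simp add: Top_def y_def Uit_plus[symmetric] add.commute)
  also have "\<dots> = Xpow U i y + Xpow U i (Xpow U 1 (Uit U (N - 1) y))"
    by (subst Y_eq[OF yV]) (simp add: Xpow_add)
  also have "\<dots> = Top U i ((N - 1) * l) f + Top U (Suc i) ((N - 1) * Suc l) f"
    by (simp add: Top_def y_def Xpow_plus[symmetric] Uit_plus[symmetric] add.commute)
  finally show ?thesis by (simp add: PsiY_def bil_add2)
qed

lemma R2: assumes "f \<in> V" "Xpow U d f = 0" "d \<le> i" shows "Top U i e f = 0"
proof -
  have "Top U i e f = Uit U e (Xpow U (i - d) (Xpow U d f))"
    using assms(3) by (simp add: Top_def Uit_Xpow[symmetric] Xpow_plus[symmetric])
  then show ?thesis using assms(2) by simp
qed

lemma R2': assumes "f \<in> V" "Xpow U d f = 0" "d \<le> i" shows "PsiY f i l = 0"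
  using R2[OF assms] by (simp add: PsiY_def)

lemma R3: assumes "f \<in> V" shows "PsiY f (2 * a) a = 0"
proof -
  define z where "z = Top U a ((N - 1) * a) f"
  have "0 = bil B z z" using balt VTop assms by (simp add: z_def)
  also have "\<dots> = bil B f (Top U (2 * a) ((N - 1) * (a + (N - 1) * a) + (N - 1) * a) f)"
    unfolding z_def using GL assms by (simp add: mult_2)
  also have "(N - 1) * (a + (N - 1) * a) + (N - 1) * a = (N - 1) * a + N * ((N - 1) * a)"
  proof -
    obtain N' where "N = Suc N'" using Npos gr0_conv_Suc by auto
    then show ?thesis by (simp add: algebra_simps)
  qed
  finally show ?thesis using Top_N assms by (simp add: PsiY_def)
qed

lemma R4: assumes "f \<in> V" "l \<le> i" shows "PsiY f i l = PsiY f i (i - l)"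
proof -
  have "PsiY f i l = bil B (Top U i ((N - 1) * l) f) f"
    using bsym assms VTop by (simp add: PsiY_def)
  also have "\<dots> = bil B f (Top U i ((N - 1) * (i + (N - 1) * l)) f)"
    using adjT assms by simp
  also have "(N - 1) * (i + (N - 1) * l) = (N - 1) * (i - l) + N * ((N - 1) * l)"
  proof -
    obtain N' where N: "N = Suc N'" using Npos gr0_conv_Suc by auto
    obtain j where "i = l + j" using assms(2) le_Suc_ex by blast
    then show ?thesis using N by (simp add: algebra_simps)
  qed
  finally show ?thesis using Top_N assms by (simp add: PsiY_def)
qed

end

context ctx begin

definition normf :: "nat \<Rightarrow> 'k^'n \<Rightarrow> bool" where
  "normf m f \<longleftrightarrow> f \<in> V \<and> Xpow U (2 * m) f = 0 \<and>
     (\<forall>a<m. PsiY f (2 * a + 1) a = (if a = m - 1 then 1 else 0))"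

lemma R1': assumes "f \<in> V"
  shows "PsiY f i l = PsiY f i (Suc l) + PsiY f (Suc i) (Suc l)"
proof -
  have "PsiY f i l = PsiY f i (Suc l) - PsiY f (Suc i) (Suc l)"
    using R1[OF assms, of i l] by simp
  then show ?thesis by (simp add: char2_minus[OF char2])
qed

lemma F1: assumes nf: "normf m f" and "a + j < m" shows "PsiY f (2 * a + j) a = 0"
  using assms(2)
proof (induction j arbitrary: a rule: nat_less_induct)
  case (1 j)
  have fV: "f \<in> V" using nf normf_def by blast
  show ?case
  proof (cases j)
    case 0 then show ?thesis using R3[OF fV] by simp
  next
    case (Suc j1)
    show ?thesis
    proof (cases j1)
      case 0
      then show ?thesis using nf Suc "1.prems" by (simp add: normf_def)
    next
      case (Suc j')
      have j: "j = j' + 2" using \<open>j = Suc j1\<close> Suc by simp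
      have "PsiY f (2 * a + j) a = PsiY f (2 * a + j) (Suc a) + PsiY f (Suc (2 * a + j)) (Suc a)"
        using R1'[OF fV] by blast
      also have "PsiY f (2 * a + j) (Suc a) = PsiY f (2 * Suc a + j') (Suc a)" using j by simp
      also have "\<dots> = 0" using "1.IH"[rule_format, of j' "Suc a"] "1.prems" j by simp
      also have "PsiY f (Suc (2 * a + j)) (Suc a) = PsiY f (2 * Suc a + Suc j') (Suc a)" using j by simp
      also have "\<dots> = 0" using "1.IH"[rule_format, of "Suc j'" "Suc a"] "1.prems" j by simp
      finally show ?thesis by simp
    qed
  qed
qed

lemma F2: assumes nf: "normf m f" and m: "m \<ge> 1"
  shows "PsiY f (2 * (m - 1) + j) (m - 1) = (if j = 1 then 1 else 0)"
proof -
  have fV: "f \<in> V" and fX: "Xpow U (2 * m) f = 0" using nf normf_def by blast+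
  consider "j = 0" | "j = 1" | "j \<ge> 2" by linarith
  then show ?thesis
  proof cases
    case 1 then show ?thesis using R3[OF fV] by simp
  next
    case 2 then show ?thesis using nf m by (simp add: normf_def)
  next
    case 3 then show ?thesis using R2'[OF fV fX] m by simp
  qed
qed

definition ee :: "nat \<Rightarrow> 'k^'n \<Rightarrow> nat \<Rightarrow> 'k^'n" where
  "ee m f i = (if m + 1 \<le> i then Top U (2 * m - i) 0 f else Top U (2 * m - i) ((N - 1) * (m + 1 - i)) f)"

lemma ee_V: "f \<in> V \<Longrightarrow> ee m f i \<in> V"
  by (simp add: ee_def VTop)

lemma Psi_mod: assumes "f \<in> V" "e = (N - 1) * l + N * q"
  shows "bil B f (Top U i e f) = PsiY f i l"
  using assms Top_N by (simp add: PsiY_def)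

lemma gram_uu: assumes nf: "normf m f" and "a < m" "a' < m"
  shows "PsiY f (a + a') a = 0"
proof -
  have fV: "f \<in> V" using nf normf_def by blast
  show ?thesis
  proof (cases "a \<le> a'")
    case True
    then obtain t where t: "a' = a + t" using le_Suc_ex by blast
    then show ?thesis using F1[OF nf, of a t] assms by (simp add: mult_2 add.assoc)
  next
    case False
    then obtain t where t: "a = a' + t" using le_Suc_ex[of a' a] by auto
    have h2: "a + a' = 2 * a' + t" using t by simp
    have "PsiY f (a + a') a = PsiY f (a + a') a'" using R4[OF fV, of a "a + a'"] by simp
    also have "\<dots> = PsiY f (2 * a' + t) a'" by (simp only: h2)
    also have "\<dots> = 0" using F1[OF nf, of a' t] assms t by simp
    finally show ?thesis .
  qed
qed

lemma gram_ul: assumes nf: "normf m f" and m: "m \<ge> 1"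
  shows "PsiY f (t + m - 1) t = (if t = m then 1 else 0)"
proof -
  have fV: "f \<in> V" using nf normf_def by blast
  show ?thesis
  proof (cases "t \<le> m - 1")
    case True
    have "PsiY f (t + m - 1) t = PsiY f (2 * t + (m - 1 - t)) t"
      using True m by (simp add: mult_2)
    also have "\<dots> = 0" using F1[OF nf, of t "m - 1 - t"] True m by simp
    finally show ?thesis using True m by simp
  next
    case False
    have "PsiY f (t + m - 1) t = PsiY f (t + m - 1) (m - 1)"
      using R4[OF fV, of t "t + m - 1"] m False by simp
    moreover have "t + m - 1 = 2 * (m - 1) + (t - m + 1)"
      using False m by simp
    moreover have "PsiY f (2 * (m - 1) + (t - m + 1)) (m - 1) = (if t - m + 1 = 1 then 1 else 0)"
      using F2[OF nf m] by blast
    ultimately show ?thesis using False by auto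
  qed
qed

lemma Top_exp: assumes "f \<in> V" "r = r' + N * q" shows "Top U p r f = Top U p r' f"
  using Top_N assms by simp

lemma gram: assumes nf: "normf m f" and m: "m \<ge> 1"
    and i: "1 \<le> i" "i \<le> 2 * m" and j: "1 \<le> j" "j \<le> 2 * m"
  shows "bil B (ee m f i) (ee m f j) = (if i + j = 2 * m + 1 then 1 else 0)"
proof -
  have fV: "f \<in> V" and fX: "Xpow U (2 * m) f = 0" using nf normf_def by blast+
  obtain N' where N: "N = Suc N'" using Npos gr0_conv_Suc by auto
  have ul: "bil B (ee m f i) (ee m f j) = (if i + j = 2 * m + 1 then 1 else 0)"
    if i: "m + 1 \<le> i" "i \<le> 2 * m" and j: "1 \<le> j" "j \<le> m" for i j
  proof -
    define a where "a = 2 * m - i"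
    define k where "k = m + 1 - j"
    have kk: "k + m - 1 = 2 * m - j" using i j by (simp add: k_def)
    have "bil B (ee m f i) (ee m f j) = bil B (Top U a 0 f) (Top U (k + m - 1) ((N - 1) * k) f)"
      using i j by (simp only: kk) (simp add: ee_def a_def k_def)
    also have "\<dots> = bil B f (Top U (a + (k + m - 1)) ((N - 1) * (a + k)) f)"
      using GL[OF fV fV] by (simp add: distrib_left)
    also have "\<dots> = PsiY f ((a + k) + m - 1) (a + k)"
      using i j by (simp add: PsiY_def a_def k_def)
    also have "\<dots> = (if a + k = m then 1 else 0)" using gram_ul[OF nf m] by blast
    also have "(a + k = m) = (i + j = 2 * m + 1)" using i j unfolding a_def k_def by arith
    finally show ?thesis .
  qed
  consider "m + 1 \<le> i" "m + 1 \<le> j" | "m + 1 \<le> i" "j \<le> m" | "i \<le> m" "m + 1 \<le> j" | "i \<le> m" "j \<le> m"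
    by linarith
  then show ?thesis
  proof cases
    case 1
    define a where "a = 2 * m - i"
    define a' where "a' = 2 * m - j"
    have "bil B (ee m f i) (ee m f j) = bil B (Top U a 0 f) (Top U a' 0 f)"
      using 1 by (simp add: ee_def a_def a'_def)
    also have "\<dots> = PsiY f (a + a') a" using GL[OF fV fV] by (simp add: PsiY_def)
    also have "\<dots> = 0"
    proof -
      have "a < m" "a' < m" unfolding a_def a'_def using 1 i j by auto
      then show ?thesis using gram_uu[OF nf] by blast
    qed
    finally show ?thesis using 1 by simp
  next
    case 2 then show ?thesis using ul i j by blast
  next
    case 3
    have "bil B (ee m f i) (ee m f j) = bil B (ee m f j) (ee m f i)" using bsym ee_V fV by blast
    then show ?thesis using ul[of j i] 3 i j by (simp add: add.commute)
  next
    case 4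
    define k where "k = m + 1 - i"
    define l where "l = m + 1 - j"
    have "bil B (ee m f i) (ee m f j) = bil B (Top U (k + m - 1) ((N - 1) * k) f) (Top U (l + m - 1) ((N - 1) * l) f)"
      using 4 by (simp add: ee_def k_def l_def mult_2)
    also have "\<dots> = bil B f (Top U ((k + m - 1) + (l + m - 1)) ((N - 1) * ((k + m - 1) + (N - 1) * k) + (N - 1) * l) f)"
      using GL[OF fV fV] by simp
    also have "\<dots> = 0"
      by (rule R2[OF fV fX, THEN arg_cong[where f="bil B f"], simplified]) (use 4 in \<open>simp add: k_def l_def\<close>)
    finally show ?thesis using 4 by simp
  qed
qed

end

context ctx begin

lemma partB:
  assumes d: "d > 0" and eV: "\<And>i. i \<in> {1..d} \<Longrightarrow> e i \<in> V"
    and r1: "U *v e 1 = e 1"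
    and r2: "\<forall>i. 2 \<le> i \<and> i \<le> d div 2 + 1 \<longrightarrow> U *v e i = (\<Sum>j=1..i. e j)"
    and r3: "\<forall>i. d div 2 + 1 < i \<and> i \<le> d \<longrightarrow> U *v e i = e i + e (i - 1)"
    and g: "\<forall>i\<in>{1..d}. \<forall>j\<in>{1..d}. bil B (e i) (e j) = (if i + j = d + 1 then 1 else 0)"
  shows "\<exists>W W'. perp2 U B V W W' \<and> isVd U B W d"
proof -
  define E where "E = e ` {1..d}"
  define W where "W = vec.span E"
  define W' where "W' = {x \<in> V. \<forall>w\<in>W. bil B w x = 0}"
  have EV: "E \<subseteq> V" using eV by (auto simp: E_def)
  have WV: "W \<subseteq> V" unfolding W_def using vec.span_minimal[OF EV Vsub] .
  have Wsub: "vec.subspace W" unfolding W_def by (rule vec.subspace_span)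
  have eW: "\<And>i. i \<in> {1..d} \<Longrightarrow> e i \<in> W" unfolding W_def E_def by (simp add: vec.span_base)
  have pair: "bil B (\<Sum>i\<in>{1..d}. c i *s e i) (e j) = c (d + 1 - j)" if j: "j \<in> {1..d}" for c j
  proof -
    have "bil B (\<Sum>i\<in>{1..d}. c i *s e i) (e j) = (\<Sum>i\<in>{1..d}. c i * bil B (e i) (e j))"
      by (simp add: bil_sum1 bil_scale1)
    also have "\<dots> = (\<Sum>i\<in>{1..d}. if i = d + 1 - j then c i else 0)"
      by (rule sum.cong) (use g j in auto)
    also have "\<dots> = c (d + 1 - j)"
    proof -
      have mm: "d + 1 - j \<in> {1..d}" using j by auto
      show ?thesis by (simp only: sum.delta[OF finite_atLeastAtMost] if_P[OF mm])
    qed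
    finally show ?thesis .
  qed
  have sumV: "(\<Sum>i\<in>{1..d}. c i *s e i) \<in> V" for c using eV by (intro Vsum Vscale) auto
  have pair': "bil B (e j) (\<Sum>i\<in>{1..d}. c i *s e i) = c (d + 1 - j)" if j: "j \<in> {1..d}" for c j
    using pair[OF j] bsym[OF eV[OF j] sumV] by simp
  have inj: "inj_on e {1..d}"
  proof (rule inj_onI)
    fix i j assume i: "i \<in> {1..d}" and j: "j \<in> {1..d}" and eq: "e i = e j"
    have k: "d + 1 - i \<in> {1..d}" using i by auto
    have "bil B (e i) (e (d + 1 - i)) = 1" using g i k by auto
    moreover have "bil B (e j) (e (d + 1 - i)) = (if j = i then 1 else 0)" using g j k i by auto
    ultimately show "i = j" using eq by (auto split: if_splits)
  qed
  have reidx: "(\<Sum>v\<in>E. h v) = (\<Sum>i\<in>{1..d}. h (e i))" for h :: "'k^'n \<Rightarrow> 'k^'n"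
    unfolding E_def using sum.reindex[OF inj, of h] by (simp add: comp_def)
  have rep: "\<exists>c. w = (\<Sum>i\<in>{1..d}. c i *s e i)" if "w \<in> W" for w
  proof -
    have fin: "finite E" by (simp add: E_def)
    have "w \<in> range (\<lambda>u. \<Sum>v\<in>E. u v *s v)" using that vec.span_finite[OF fin] W_def by simp
    then obtain u where "w = (\<Sum>v\<in>E. u v *s v)" by auto
    then have "w = (\<Sum>i\<in>{1..d}. u (e i) *s e i)" using reidx by simp
    then show ?thesis by (intro exI[of _ "\<lambda>i. u (e i)"])
  qed
  have indep: "vec.independent E"
    unfolding vec.independent_explicit
  proof (intro conjI allI impI ballI)
    show "finite E" by (simp add: E_def)
  next
    fix c v assume h: "(\<Sum>v\<in>E. c v *s v) = 0" and v: "v \<in> E"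
    then obtain i where i: "i \<in> {1..d}" and vi: "v = e i" by (auto simp: E_def)
    have h': "(\<Sum>i\<in>{1..d}. c (e i) *s e i) = 0" using h reidx by simp
    have k: "d + 1 - i \<in> {1..d}" using i by auto
    have "bil B (\<Sum>i\<in>{1..d}. c (e i) *s e i) (e (d + 1 - i)) = c (e (d + 1 - (d + 1 - i)))"
      using pair[OF k] by simp
    then show "c v = 0" using h' i vi by simp
  qed
  have WU: "U *v w \<in> W" if "w \<in> W" for w
  proof -
    have "vec.subspace {x. U *v x \<in> W}" by (rule vec.subspace_linear_preimage[OF Wsub])
    moreover have "U *v x \<in> W" if "x \<in> E" for x
    proof -
      obtain i where i: "i \<in> {1..d}" and xi: "x = e i" using \<open>x \<in> E\<close> by (auto simp: E_def)
      consider "i = 1" | "2 \<le> i \<and> i \<le> d div 2 + 1" | "d div 2 + 1 < i \<and> i \<le> d" using i by fastforce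
      then show ?thesis
      proof cases
        case 1 then show ?thesis using r1 eW i xi by simp
      next
        case 2
        then have "U *v x = (\<Sum>j=1..i. e j)" using r2 xi by simp
        moreover have "(\<Sum>j=1..i. e j) \<in> W" using i
          by (intro Wsub[THEN vec.subspace_sum]) (auto intro!: eW)
        ultimately show ?thesis by simp
      next
        case 3
        then have "U *v x = e i + e (i - 1)" using r3 xi by simp
        moreover have "e i + e (i - 1) \<in> W" using i 3 d
          by (intro vec.subspace_add[OF Wsub] eW) auto
        ultimately show ?thesis by simp
      qed
    qed
    ultimately show ?thesis using vec.span_induct[of w E "\<lambda>x. U *v x \<in> W"] that
      unfolding W_def by auto
  qed
  have WUit: "Uit U r w \<in> W" if "w \<in> W" for w r
    using that by (induction r) (simp_all add: Uit_Suc WU)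
  have W'sub: "vec.subspace W'"
    unfolding vec.subspace_def W'_def
    by (auto simp: V0 Vadd Vscale bil_add2 bil_scale2)
  have W'U: "U *v x \<in> W'" if "x \<in> W'" for x
  proof -
    have xV: "x \<in> V" using that W'_def by blast
    have "bil B w (U *v x) = 0" if w: "w \<in> W" for w
    proof -
      have wV: "w \<in> V" using w WV by blast
      have "U *v Uit U (N - 1) w = Uit U N w" using Npos by (metis Suc_diff_1 Uit_Suc)
      then have "w = U *v Uit U (N - 1) w" using Nper wV by simp
      then have "bil B w (U *v x) = bil B (Uit U (N - 1) w) x"
        using binv VUit wV xV by metis
      also have "\<dots> = 0" using \<open>x \<in> W'\<close> WUit w unfolding W'_def by blast
      finally show ?thesis .
    qed
    then show ?thesis using xV Vinv unfolding W'_def by blast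
  qed
  have Int: "W \<inter> W' = {0}"
  proof
    show "{0} \<subseteq> W \<inter> W'" using vec.subspace_0 Wsub W'sub by blast
    show "W \<inter> W' \<subseteq> {0}"
    proof
      fix w assume w: "w \<in> W \<inter> W'"
      then obtain c where c: "w = (\<Sum>i\<in>{1..d}. c i *s e i)" using rep by blast
      have "c i = 0" if i: "i \<in> {1..d}" for i
      proof -
        have k: "d + 1 - i \<in> {1..d}" using i by auto
        have "bil B (e (d + 1 - i)) w = 0" using w eW[OF k] unfolding W'_def by blast
        moreover have "bil B (e (d + 1 - i)) w = c (d + 1 - (d + 1 - i))" using pair'[OF k] c by simp
        ultimately show ?thesis using i by simp
      qed
      then show "w \<in> {0}" using c by simp
    qed
  qed
  have Sum: "{w + w' | w w'. w \<in> W \<and> w' \<in> W'} = V"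
  proof
    show "{w + w' | w w'. w \<in> W \<and> w' \<in> W'} \<subseteq> V" using WV W'_def Vadd by auto
    show "V \<subseteq> {w + w' | w w'. w \<in> W \<and> w' \<in> W'}"
    proof
      fix x assume xV: "x \<in> V"
      define p where "p = (\<Sum>i\<in>{1..d}. bil B (e (d + 1 - i)) x *s e i)"
      have pW: "p \<in> W" unfolding p_def
        by (intro vec.subspace_sum[OF Wsub] vec.subspace_scale[OF Wsub] eW) auto
      have pV: "p \<in> V" using pW WV by blast
      have "bil B w (x - p) = 0" if "w \<in> W" for w
      proof -
        have "vec.subspace {w. bil B w (x - p) = 0}"
          unfolding vec.subspace_def by (auto simp: bil_add1 bil_scale1)
        moreover have "bil B y (x - p) = 0" if "y \<in> E" for y
        proof -
          obtain j where j: "j \<in> {1..d}" and yj: "y = e j" using \<open>y \<in> E\<close> by (auto simp: E_def)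
          have "bil B (e j) p = bil B (e (d + 1 - (d + 1 - j))) x"
            unfolding p_def by (rule pair'[OF j])
          then show ?thesis using j yj by (simp add: bil_diff2)
        qed
        ultimately show ?thesis using vec.span_induct[of w E "\<lambda>w. bil B w (x - p) = 0"] that
          unfolding W_def by auto
      qed
      then have "x - p \<in> W'" unfolding W'_def using Vdiff xV pV by blast
      then show "x \<in> {w + w' | w w'. w \<in> W \<and> w' \<in> W'}" using pW by force
    qed
  qed
  have "perp2 U B V W W'"
    unfolding perp2_def submod_def
    using Wsub W'sub WU W'U Int Sum W'_def by blast
  moreover have "isVd U B W d"
    unfolding isVd_def
    using inj indep r1 r2 r3 g by (auto simp: W_def E_def)
  ultimately show ?thesis by blast
qed

end

context ctx begin

lemma Uw: "U *v w = w + Xpow U 1 w" by (simp add: X1')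

lemma UY: assumes "w \<in> V" shows "U *v Top U 1 (N - 1) w = Xpow U 1 w"
proof -
  have "U *v Uit U (N - 1) w = Uit U N w" using Npos by (metis Suc_diff_1 Uit_Suc)
  then show ?thesis using assms by (simp add: Top_def U_Xpow Nper)
qed

lemma X_Top: "Xpow U (Suc 0) (Top U p r w) = Top U (Suc p) r w"
  using Top_Top[of U 1 0 p r w] by (simp add: Top_def)

lemma ee_step: assumes m: "m \<ge> 1" and i: "2 \<le> i" "i \<le> m + 1"
  shows "ee m f (i - 1) = Top U 1 (N - 1) (ee m f i)"
proof (cases "i = m + 1")
  case True
  then show ?thesis using m by (simp add: ee_def Top_Top)
next
  case False
  then have i': "i \<le> m" using i by simp
  have "ee m f i = Top U (2 * m - i) ((N - 1) * (m + 1 - i)) f" using i' by (simp add: ee_def)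
  then have "Top U 1 (N - 1) (ee m f i) = Top U (1 + (2 * m - i)) ((N - 1) + (N - 1) * (m + 1 - i)) f"
    by (simp add: Top_Top)
  also have "1 + (2 * m - i) = 2 * m - (i - 1)" using i i' by simp
  also have "(N - 1) + (N - 1) * (m + 1 - i) = (N - 1) * (m + 1 - (i - 1))"
  proof -
    have "m + 1 - (i - 1) = Suc (m + 1 - i)" using i i' by simp
    then show ?thesis by simp
  qed
  finally have "Top U 1 (N - 1) (ee m f i) = Top U (2 * m - (i - 1)) ((N - 1) * (m + 1 - (i - 1))) f" .
  moreover have "\<not> (m + 1 \<le> i - 1)" using i' by simp
  ultimately show ?thesis by (simp only: ee_def if_False)
qed

lemma ee_X: assumes nf: "normf m f" and m: "m \<ge> 1" and i: "1 \<le> i" "i \<le> m + 1"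
  shows "Xpow U 1 (ee m f i) = (\<Sum>j\<in>{1..<i}. ee m f j)"
  using i
proof (induction i rule: nat_induct_at_least)
  case base
  have fV: "f \<in> V" and fX: "Xpow U (2 * m) f = 0" using nf normf_def by blast+
  have "ee m f 1 = Top U (2 * m - 1) ((N - 1) * m) f" using m by (simp add: ee_def)
  then have "Xpow U 1 (ee m f 1) = Top U (Suc (2 * m - 1)) ((N - 1) * m) f" by (simp add: X_Top)
  also have "\<dots> = 0" using R2[OF fV fX] m by simp
  finally show ?case by simp
next
  case (Suc i)
  have fV: "f \<in> V" using nf normf_def by blast
  have "Xpow U 1 (ee m f (Suc i)) = U *v Top U 1 (N - 1) (ee m f (Suc i))"
    using UY ee_V fV by simp
  also have "Top U 1 (N - 1) (ee m f (Suc i)) = ee m f i"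
    using ee_step[OF m, of "Suc i"] Suc by simp
  also have "U *v ee m f i = ee m f i + (\<Sum>j\<in>{1..<i}. ee m f j)"
    using Suc by (simp add: Uw)
  also have "\<dots> = (\<Sum>j\<in>{1..<Suc i}. ee m f j)"
    using Suc by (simp add: add.commute)
  finally show ?case .
qed

lemma ee_r1: assumes nf: "normf m f" and m: "m \<ge> 1" shows "U *v ee m f 1 = ee m f 1"
  using ee_X[OF nf m, of 1] m by (simp add: Uw)

lemma ee_r2: assumes nf: "normf m f" and m: "m \<ge> 1" and i: "2 \<le> i" "i \<le> m + 1"
  shows "U *v ee m f i = (\<Sum>j=1..i. ee m f j)"
proof -
  have "U *v ee m f i = ee m f i + (\<Sum>j\<in>{1..<i}. ee m f j)" using ee_X[OF nf m, of i] i by (simp add: Uw)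
  also have "\<dots> = (\<Sum>j=1..i. ee m f j)"
  proof -
    have "{1..i} = insert i {1..<i}" using i by auto
    then show ?thesis by simp
  qed
  finally show ?thesis .
qed

lemma ee_r3: assumes m: "m \<ge> 1" and i: "m + 1 < i" "i \<le> 2 * m"
  shows "U *v ee m f i = ee m f i + ee m f (i - 1)"
proof -
  have "Xpow U 1 (ee m f i) = Top U (Suc (2 * m - i)) 0 f" using i by (simp add: ee_def X_Top)
  also have "Suc (2 * m - i) = 2 * m - (i - 1)" using i by simp
  also have "Top U (2 * m - (i - 1)) 0 f = ee m f (i - 1)"
  proof -
    have "m + 1 \<le> i - 1" using i by simp
    then show ?thesis by (simp only: ee_def if_True)
  qed
  finally show ?thesis by (simp add: Uw)
qed

lemma mainA: assumes nf: "normf m f" and m: "m \<ge> 1"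
  shows "\<exists>W W'. perp2 U B V W W' \<and> isVd U B W (2 * m)"
proof (rule partB)
  have fV: "f \<in> V" using nf normf_def by blast
  show "0 < 2 * m" using m by simp
  show "\<And>i. i \<in> {1..2 * m} \<Longrightarrow> ee m f i \<in> V" using ee_V fV by blast
  show "U *v ee m f 1 = ee m f 1" using ee_r1[OF nf m] .
  show "\<forall>i. 2 \<le> i \<and> i \<le> 2 * m div 2 + 1 \<longrightarrow> U *v ee m f i = (\<Sum>j = 1..i. ee m f j)"
    using ee_r2[OF nf m] by simp
  show "\<forall>i. 2 * m div 2 + 1 < i \<and> i \<le> 2 * m \<longrightarrow> U *v ee m f i = ee m f i + ee m f (i - 1)"
    using ee_r3[OF m] by simp
  show "\<forall>i\<in>{1..2 * m}. \<forall>j\<in>{1..2 * m}. bil B (ee m f i) (ee m f j) = (if i + j = 2 * m + 1 then 1 else 0)"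
    using gram[OF nf m] by auto
qed

end

definition Qf :: "(nat \<Rightarrow> 'k::field) \<Rightarrow> nat \<Rightarrow> 'k \<Rightarrow> (nat \<Rightarrow> 'k) \<Rightarrow> nat \<Rightarrow> 'k" where
  "Qf c m \<alpha> \<beta> j = \<alpha> * \<alpha> * c j + \<alpha> * (\<Sum>l<m. \<beta> l * c (j + l + 1))
     + (\<Sum>i<m. \<Sum>l<m. \<beta> i * \<beta> l * c (i + j + l + 1))"

lemma Qf_upd:
  fixes c :: "nat \<Rightarrow> 'k::field"
  assumes ch: "CHAR('k) = 2" and t: "t < m"
  shows "Qf c m \<alpha> (\<beta>(t := \<beta> t + \<delta>)) j = Qf c m \<alpha> \<beta> j + \<alpha> * \<delta> * c (j + t + 1) + \<delta> * \<delta> * c (2 * t + j + 1)"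
proof -
  define e where "e = (\<lambda>i. if i = t then \<delta> else (0::'k))"
  have b': "\<beta>(t := \<beta> t + \<delta>) = (\<lambda>i. \<beta> i + e i)" by (auto simp: e_def)
  have s1: "(\<Sum>l<m. e l * g l) = \<delta> * g t" for g :: "nat \<Rightarrow> 'k"
  proof -
    have "(\<Sum>l<m. e l * g l) = (\<Sum>l<m. if l = t then \<delta> * g l else 0)"
      by (rule sum.cong) (auto simp: e_def)
    also have "\<dots> = \<delta> * g t" using t by (simp add: sum.delta)
    finally show ?thesis .
  qed
  have L: "(\<Sum>l<m. (\<beta> l + e l) * c (j + l + 1)) = (\<Sum>l<m. \<beta> l * c (j + l + 1)) + \<delta> * c (j + t + 1)"
    by (simp add: distrib_right sum.distrib s1)
  have Q1: "(\<Sum>i<m. \<Sum>l<m. \<beta> i * e l * c (i + j + l + 1)) = \<delta> * (\<Sum>i<m. \<beta> i * c (i + j + t + 1))"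
  proof -
    have "(\<Sum>i<m. \<Sum>l<m. \<beta> i * e l * c (i + j + l + 1)) = (\<Sum>i<m. \<beta> i * (\<Sum>l<m. e l * c (i + j + l + 1)))"
      by (simp add: sum_distrib_left mult.assoc)
    also have "\<dots> = (\<Sum>i<m. \<beta> i * (\<delta> * c (i + j + t + 1)))" by (simp add: s1)
    finally show ?thesis by (simp add: sum_distrib_left algebra_simps)
  qed
  have Q2: "(\<Sum>i<m. \<Sum>l<m. e i * \<beta> l * c (i + j + l + 1)) = \<delta> * (\<Sum>i<m. \<beta> i * c (i + j + t + 1))"
  proof -
    have "(\<Sum>i<m. \<Sum>l<m. e i * \<beta> l * c (i + j + l + 1)) = (\<Sum>i<m. e i * (\<Sum>l<m. \<beta> l * c (i + j + l + 1)))"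
      by (simp add: sum_distrib_left mult.assoc)
    also have "\<dots> = \<delta> * (\<Sum>l<m. \<beta> l * c (t + j + l + 1))" by (rule s1)
    finally show ?thesis by (simp add: algebra_simps)
  qed
  have Q3: "(\<Sum>i<m. \<Sum>l<m. e i * e l * c (i + j + l + 1)) = \<delta> * \<delta> * c (2 * t + j + 1)"
  proof -
    have "(\<Sum>i<m. \<Sum>l<m. e i * e l * c (i + j + l + 1)) = (\<Sum>i<m. e i * (\<Sum>l<m. e l * c (i + j + l + 1)))"
      by (simp add: sum_distrib_left mult.assoc)
    also have "\<dots> = \<delta> * (\<Sum>l<m. e l * c (t + j + l + 1))" by (rule s1)
    also have "\<dots> = \<delta> * (\<delta> * c (t + j + t + 1))" by (simp add: s1)
    also have "t + j + t + 1 = 2 * t + j + 1" by simp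
    finally show ?thesis by (simp only: mult.assoc)
  qed
  have Q: "(\<Sum>i<m. \<Sum>l<m. (\<beta> i + e i) * (\<beta> l + e l) * c (i + j + l + 1))
     = (\<Sum>i<m. \<Sum>l<m. \<beta> i * \<beta> l * c (i + j + l + 1))
       + (\<Sum>i<m. \<Sum>l<m. \<beta> i * e l * c (i + j + l + 1))
       + (\<Sum>i<m. \<Sum>l<m. e i * \<beta> l * c (i + j + l + 1))
       + (\<Sum>i<m. \<Sum>l<m. e i * e l * c (i + j + l + 1))"
    by (simp add: algebra_simps sum.distrib)
  have dbl: "x + x = 0" for x :: 'k using char2_double[OF ch] .
  show ?thesis
    unfolding Qf_def b' L Q Q1 Q2 Q3
    by (simp add: algebra_simps char2_two[OF ch])
qed

lemma seq_exists:
  fixes c :: "nat \<Rightarrow> 'k::alg_closed_field"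
  assumes ch: "CHAR('k) = 2" and m: "m \<ge> 1" and cm: "c (m - 1) \<noteq> 0" and cz: "\<And>k. m \<le> k \<Longrightarrow> c k = 0"
  shows "\<exists>\<alpha> \<beta>. \<forall>j<m. Qf c m \<alpha> \<beta> j = (if j = m - 1 then 1 else 0)"
proof -
  obtain \<alpha> where a2: "\<alpha> ^ 2 = inverse (c (m - 1))" using nth_root_exists[of 2] by auto
  have aa: "\<alpha> * \<alpha> * c (m - 1) = 1" using a2 cm by (simp add: power2_eq_square)
  have a0: "\<alpha> \<noteq> 0" using aa by auto
  have claim: "\<exists>\<beta>. \<forall>j<m. m \<le> j + t + 1 \<longrightarrow> Qf c m \<alpha> \<beta> j = (if j = m - 1 then 1 else 0)" for t
  proof (induction t)
    case 0
    have "Qf c m \<alpha> (\<lambda>_. 0) j = (if j = m - 1 then 1 else 0)" if "j < m" "m \<le> j + 0 + 1" for j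
    proof -
      have "j = m - 1" using that by simp
      then show ?thesis using aa by (simp add: Qf_def)
    qed
    then show ?case by blast
  next
    case (Suc t)
    then obtain \<beta> where b: "\<forall>j<m. m \<le> j + t + 1 \<longrightarrow> Qf c m \<alpha> \<beta> j = (if j = m - 1 then 1 else 0)" by blast
    show ?case
    proof (cases "t + 2 \<le> m")
      case False
      then show ?thesis using b by (intro exI[of _ \<beta>]) auto
    next
      case True
      define j0 where "j0 = m - t - 2"
      have tm: "t < m" using True by simp
      have "\<exists>\<delta>. Qf c m \<alpha> \<beta> j0 + \<alpha> * \<delta> * c (j0 + t + 1) + \<delta> * \<delta> * c (2 * t + j0 + 1) = 0"
      proof (cases "c (2 * t + j0 + 1) = 0")
        case True
        define f where "f = (\<lambda>k::nat. if k = 0 then Qf c m \<alpha> \<beta> j0 else \<alpha> * c (j0 + t + 1))"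
        have "j0 + t + 1 = m - 1" using \<open>t + 2 \<le> m\<close> unfolding j0_def by arith
        then have "c (j0 + t + 1) = c (m - 1)" by simp
        then have "f 1 \<noteq> 0" using a0 cm by (simp add: f_def)
        then obtain x where "(\<Sum>k\<le>1. f k * x ^ k) = 0" using alg_closed[of 1 f] by auto
        then show ?thesis using True by (intro exI[of _ x]) (simp add: f_def algebra_simps)
      next
        case False
        define f where "f = (\<lambda>k::nat. if k = 0 then Qf c m \<alpha> \<beta> j0 else if k = 1 then \<alpha> * c (j0 + t + 1) else c (2 * t + j0 + 1))"
        have "f 2 \<noteq> 0" using False by (simp add: f_def)
        then obtain x where x: "(\<Sum>k\<le>2. f k * x ^ k) = 0" using alg_closed[of 2 f] by auto
        have "(\<Sum>k\<le>2. f k * x ^ k) = f 0 + f 1 * x + f 2 * x ^ 2"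
          by (simp add: numeral_2_eq_2)
        then show ?thesis using x by (intro exI[of _ x]) (simp add: f_def algebra_simps power2_eq_square)
      qed
      then obtain \<delta> where \<delta>: "Qf c m \<alpha> \<beta> j0 + \<alpha> * \<delta> * c (j0 + t + 1) + \<delta> * \<delta> * c (2 * t + j0 + 1) = 0" by blast
      define \<beta>' where "\<beta>' = \<beta>(t := \<beta> t + \<delta>)"
      have upd: "Qf c m \<alpha> \<beta>' j = Qf c m \<alpha> \<beta> j + \<alpha> * \<delta> * c (j + t + 1) + \<delta> * \<delta> * c (2 * t + j + 1)" for j
        unfolding \<beta>'_def using Qf_upd[OF ch tm] .
      have "Qf c m \<alpha> \<beta>' j = (if j = m - 1 then 1 else 0)" if j: "j < m" "m \<le> j + Suc t + 1" for j
      proof (cases "m \<le> j + t + 1")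
        case True
        then show ?thesis using upd[of j] b j cz[of "j + t + 1"] cz[of "2 * t + j + 1"] by simp
      next
        case False
        then have "j = j0" using j by (simp add: j0_def)
        moreover have "j0 \<noteq> m - 1" using True by (simp add: j0_def)
        ultimately show ?thesis using upd[of j] \<delta> by simp
      qed
      then show ?thesis by blast
    qed
  qed
  obtain \<beta> where "\<forall>j<m. m \<le> j + (m - 1) + 1 \<longrightarrow> Qf c m \<alpha> \<beta> j = (if j = m - 1 then 1 else 0)"
    using claim[of "m - 1"] by blast
  then show ?thesis using m by (intro exI[of _ \<alpha>] exI[of _ \<beta>]) auto
qed

context ctx begin

lemma K2: assumes "w \<in> V" "Xpow U d w = 0" "d \<ge> 1"
  shows "Xpow U (d - 1) (Uit U (N - 1) w) = Xpow U (d - 1) w"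
proof -
  have "Xpow U (d - 1) (Uit U (N - 1) w) = Xpow U (d - 1) w + Xpow U (d - 1) (Xpow U 1 (Uit U (N - 1) w))"
    by (subst Y_eq[OF assms(1)]) (simp add: Xpow_add)
  also have "Xpow U (d - 1) (Xpow U 1 (Uit U (N - 1) w)) = Uit U (N - 1) (Xpow U d w)"
    using assms(3) by (simp add: Xpow_plus[symmetric] Uit_Xpow)
  finally show ?thesis using assms(2) by simp
qed

lemma K2': assumes "w \<in> V" "Xpow U d w = 0" "d \<ge> 1"
  shows "Xpow U (d - 1) (Uit U ((N - 1) * l) w) = Xpow U (d - 1) w"
proof (induction l)
  case (Suc l)
  define w' where "w' = Uit U ((N - 1) * l) w"
  have w'V: "w' \<in> V" using assms by (simp add: w'_def VUit)
  have w'X: "Xpow U d w' = 0" using assms by (simp add: w'_def Uit_Xpow[symmetric])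
  have "Uit U ((N - 1) * Suc l) w = Uit U (N - 1) w'" by (simp add: w'_def Uit_plus[symmetric])
  then show ?case using K2[OF w'V w'X assms(3)] Suc by (simp add: w'_def)
qed simp

lemma Psi_top: assumes "w \<in> V" "Xpow U d w = 0" "d \<ge> 1"
  shows "PsiY w (d - 1) l = bil B (Xpow U (d - 1) w) w"
  using K2'[OF assms] bsym[OF assms(1) VXpow[OF assms(1)]] by (simp add: PsiY_def Top_def)

lemma evenness: assumes "v \<in> V" "Xpow U d v = 0" "bil B (Xpow U (d - 1) v) v \<noteq> 0" "d > 0"
  shows "even d"
proof (rule ccontr)
  assume "odd d"
  then obtain k where k: "d = 2 * k + 1" using oddE by blast
  have "PsiY v (2 * k) k = 0" using R3 assms(1) by blast
  moreover have "PsiY v (d - 1) k = bil B (Xpow U (d - 1) v) v" using Psi_top assms by simp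
  ultimately show False using assms(3) k by simp
qed

lemma exp_eq1: "(N - 1) * (2 * i + 1 + (N - 1) * i) + (N - 1) * j = (N - 1) * (i + j + 1) + N * ((N - 1) * i)"
proof -
  obtain N' where "N = Suc N'" using Npos gr0_conv_Suc by auto
  then show ?thesis by (simp add: algebra_simps)
qed

lemma exp_eq2: "(N - 1) * (2 * i + 1 + (N - 1) * i) + ((N - 1) * j + (N - 1) * l) = (N - 1) * (i + j + l + 1) + N * ((N - 1) * i)"
proof -
  obtain N' where "N = Suc N'" using Npos gr0_conv_Suc by auto
  then show ?thesis by (simp add: algebra_simps)
qed

lemma construct_f: assumes vV: "v \<in> V" and vX: "Xpow U (2 * m) v = 0" and m: "m \<ge> 1"
    and nz: "bil B (Xpow U (2 * m - 1) v) v \<noteq> 0"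
  shows "\<exists>f. normf m f"
proof -
  define c where "c j = PsiY v (2 * j + 1) j" for j
  define g where "g l = Top U (2 * l + 1) ((N - 1) * l) v" for l
  have gV: "g l \<in> V" for l using vV by (simp add: g_def VTop)
  have cm: "c (m - 1) \<noteq> 0"
  proof -
    have "2 * (m - 1) + 1 = 2 * m - 1" using m by simp
    then have "c (m - 1) = PsiY v (2 * m - 1) (m - 1)" by (simp only: c_def)
    also have "\<dots> = bil B (Xpow U (2 * m - 1) v) v" using Psi_top[OF vV vX] m by simp
    finally show ?thesis using nz by simp
  qed
  have cz: "c k = 0" if "m \<le> k" for k using R2'[OF vV vX] that by (simp add: c_def)
  obtain \<alpha> \<beta> where ab: "\<forall>j<m. Qf c m \<alpha> \<beta> j = (if j = m - 1 then 1 else 0)"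
    using seq_exists[of m c, OF char2 m cm cz] by blast
  define f where "f = \<alpha> *s v + (\<Sum>l<m. \<beta> l *s g l)"
  have fV: "f \<in> V" unfolding f_def using vV gV by (intro Vadd Vscale Vsum) auto
  have XT: "Xpow U (2 * m) (Top U p r v) = 0" for p r
    using R2[OF vV vX, of "2 * m + p" r] by (simp add: Top_def Xpow_plus)
  have fX: "Xpow U (2 * m) f = 0"
    unfolding f_def by (simp add: Xpow_add Xpow_scale Xpow_sum g_def XT vX)
  have B1: "bil B v (Top U (2 * j + 1) ((N - 1) * j) v) = c j" for j
    by (simp add: c_def PsiY_def)
  have B2: "bil B v (Top U (2 * j + 1) ((N - 1) * j) (g l)) = c (j + l + 1)" for j l
  proof -
    define J where "J = j + l + 1"
    have "Top U (2 * j + 1) ((N - 1) * j) (g l) = Top U (2 * J) ((N - 1) * (J - 1)) v"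
      by (simp add: g_def Top_Top J_def distrib_left)
    then have "bil B v (Top U (2 * j + 1) ((N - 1) * j) (g l)) = PsiY v (2 * J) (J - 1)"
      by (simp add: PsiY_def)
    also have "\<dots> = - PsiY v (Suc (2 * J)) J"
    proof -
      have "PsiY v (2 * J) (Suc (J - 1)) = PsiY v (2 * J) (J - 1) + PsiY v (Suc (2 * J)) (Suc (J - 1))"
        using R1[OF vV] by blast
      moreover have "Suc (J - 1) = J" by (simp add: J_def)
      moreover have "PsiY v (2 * J) J = 0" using R3[OF vV] by blast
      ultimately show ?thesis by (simp add: eq_neg_iff_add_eq_0)
    qed
    also have "\<dots> = c J" by (simp add: char2_neg[OF char2] c_def)
    finally show ?thesis by (simp add: J_def)
  qed
  have B3: "bil B (g i) (Top U (2 * j + 1) ((N - 1) * j) v) = 0" for i j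
  proof -
    have "bil B (g i) (Top U (2 * j + 1) ((N - 1) * j) v)
        = bil B v (Top U (2 * i + 1 + (2 * j + 1)) ((N - 1) * (2 * i + 1 + (N - 1) * i) + (N - 1) * j) v)"
      unfolding g_def by (rule GL[OF vV vV])
    also have "2 * i + 1 + (2 * j + 1) = 2 * (i + j + 1)" by simp
    also have "bil B v (Top U (2 * (i + j + 1)) ((N - 1) * (2 * i + 1 + (N - 1) * i) + (N - 1) * j) v)
       = PsiY v (2 * (i + j + 1)) (i + j + 1)"
      by (rule Psi_mod[OF vV exp_eq1])
    also have "\<dots> = 0" using R3[OF vV] by blast
    finally show ?thesis .
  qed
  have B4: "bil B (g i) (Top U (2 * j + 1) ((N - 1) * j) (g l)) = c (i + j + l + 1)" for i j l
  proof -
    have "bil B (g i) (Top U (2 * j + 1) ((N - 1) * j) (g l))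
       = bil B (Top U (2 * i + 1) ((N - 1) * i) v) (Top U (2 * j + 1 + (2 * l + 1)) ((N - 1) * j + (N - 1) * l) v)"
      by (simp add: g_def Top_Top)
    also have "\<dots> = bil B v (Top U (2 * i + 1 + (2 * j + 1 + (2 * l + 1))) ((N - 1) * (2 * i + 1 + (N - 1) * i) + ((N - 1) * j + (N - 1) * l)) v)"
      by (rule GL[OF vV vV])
    also have "2 * i + 1 + (2 * j + 1 + (2 * l + 1)) = 2 * (i + j + l + 1) + 1" by simp
    also have "bil B v (Top U (2 * (i + j + l + 1) + 1) ((N - 1) * (2 * i + 1 + (N - 1) * i) + ((N - 1) * j + (N - 1) * l)) v)
       = PsiY v (2 * (i + j + l + 1) + 1) (i + j + l + 1)"
      by (rule Psi_mod[OF vV exp_eq2])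
    finally show ?thesis by (simp add: c_def)
  qed
  have psi: "PsiY f (2 * a + 1) a = Qf c m \<alpha> \<beta> a" for a
  proof -
    define T where "T w = Top U (2 * a + 1) ((N - 1) * a) w" for w
    have Tf: "T f = \<alpha> *s T v + (\<Sum>l<m. \<beta> l *s T (g l))"
      unfolding f_def T_def by (simp add: Top_add Top_scale Top_sum)
    have "PsiY f (2 * a + 1) a = bil B f (T f)" by (simp add: PsiY_def T_def)
    also have "\<dots> = Qf c m \<alpha> \<beta> a"
    proof -
      have C1: "bil B v (T v) = c a" unfolding T_def by (rule B1)
      have C2: "bil B v (T (g l)) = c (a + l + 1)" for l unfolding T_def by (rule B2)
      have C3: "bil B (g i) (T v) = 0" for i unfolding T_def by (rule B3)
      have C4: "bil B (g i) (T (g l)) = c (i + a + l + 1)" for i l unfolding T_def by (rule B4)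
      show ?thesis
      unfolding Tf
      apply (simp add: f_def bil_add1 bil_add2 bil_scale1 bil_scale2 bil_sum1 bil_sum2 C1 C2 C3 C4)
      apply (simp add: Qf_def algebra_simps sum_distrib_left sum.distrib)
      done
    qed
    finally show ?thesis .
  qed
  have "normf m f" unfolding normf_def using fV fX psi ab by simp
  then show ?thesis by blast
qed

lemma i_to_ii: assumes vV: "v \<in> V" and d: "d > 0" and vX: "Xpow U d v = 0"
    and nz: "bil B (Xpow U (d - 1) v) v \<noteq> 0"
  shows "even d \<and> (\<exists>W W'. perp2 U B V W W' \<and> isVd U B W d)"
proof -
  have ev: "even d" using evenness assms by blast
  then obtain m where dm: "d = 2 * m" by blast
  have m: "m \<ge> 1" using d dm by simp
  obtain f where "normf m f" using construct_f[OF vV _ m] vX nz dm by blast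
  then show ?thesis using mainA m dm ev by blast
qed

end

lemma span_X:
  assumes "\<And>l. l \<in> A \<Longrightarrow> Xpow U 1 (e l) \<in> vec.span (e ` A')" "s \<in> vec.span (e ` A)"
  shows "Xpow U 1 s \<in> vec.span (e ` A')"
proof -
  have "vec.subspace {x. Xpow U 1 x \<in> vec.span (e ` A')}"
    unfolding vec.subspace_def
    by (auto simp: Xpow_add Xpow_scale vec.span_add vec.span_scale vec.span_zero)
  then show ?thesis using vec.span_induct[OF assms(2), of "\<lambda>x. Xpow U 1 x \<in> vec.span (e ` A')"] assms(1)
    by auto
qed


lemma ii_to_i:
  assumes iv: "isVd U B W d" and d: "d > 0"
  shows "\<exists>v\<in>W. Xpow U d v = 0 \<and> bil B (Xpow U (d - 1) v) v \<noteq> 0"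
proof -
  obtain e where inj: "inj_on e {1..d}" and sp: "vec.span (e ` {1..d}) = W"
    and r1: "U *v e 1 = e 1"
    and r2: "\<forall>i. 2 \<le> i \<and> i \<le> d div 2 + 1 \<longrightarrow> U *v e i = (\<Sum>j=1..i. e j)"
    and r3: "\<forall>i. d div 2 + 1 < i \<and> i \<le> d \<longrightarrow> U *v e i = e i + e (i - 1)"
    and g: "\<forall>i\<in>{1..d}. \<forall>j\<in>{1..d}. bil B (e i) (e j) = (if i + j = d + 1 then 1 else 0)"
    using iv unfolding isVd_def by blast
  define S where "S j = vec.span (e ` {1..<j})" for j
  have X1e: "Xpow U 1 (e 1) = 0" using r1 by (simp add: Xpow_Suc)
  have Xe: "Xpow U 1 (e i) - e (i - 1) \<in> S (i - 1)" if i: "2 \<le> i" "i \<le> d" for i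
  proof (cases "i \<le> d div 2 + 1")
    case True
    have "Xpow U 1 (e i) = (\<Sum>j=1..i. e j) - e i" using r2 i True by (simp add: Xpow_Suc)
    also have "(\<Sum>j=1..i. e j) = e i + e (i - 1) + (\<Sum>j\<in>{1..<i - 1}. e j)"
    proof -
      have "{1..i} = insert i (insert (i - 1) {1..<i - 1})" using i by auto
      moreover have "i \<notin> insert (i - 1) {1..<i - 1}" "i - 1 \<notin> {1..<i - 1}" using i by auto
      ultimately show ?thesis by (simp add: add.assoc)
    qed
    finally have "Xpow U 1 (e i) - e (i - 1) = (\<Sum>j\<in>{1..<i - 1}. e j)" by simp
    moreover have "(\<Sum>j\<in>{1..<i - 1}. e j) \<in> vec.span (e ` {1..<i - 1})"
      by (intro vec.span_sum vec.span_base) auto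
    ultimately show ?thesis unfolding S_def by simp
  next
    case False
    then have "Xpow U 1 (e i) = e (i - 1)" using r3 i by (simp add: Xpow_Suc)
    then show ?thesis by (simp add: S_def vec.span_zero)
  qed
  have Xe': "Xpow U 1 (e l) \<in> S l" if "l \<in> {1..d}" for l
  proof (cases "l = 1")
    case True then show ?thesis using X1e by (simp add: S_def vec.span_zero)
  next
    case False
    then have l: "2 \<le> l" "l \<le> d" using that by auto
    have "Xpow U 1 (e l) = (Xpow U 1 (e l) - e (l - 1)) + e (l - 1)" by simp
    moreover have "S (l - 1) \<subseteq> S l" unfolding S_def by (intro vec.span_mono image_mono) auto
    moreover have "e (l - 1) \<in> S l" using l unfolding S_def by (intro vec.span_base) auto
    ultimately show ?thesis using Xe[OF l] by (metis (no_types, lifting) S_def subsetD vec.span_add)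
  qed
  have XS: "Xpow U 1 s \<in> S (j - 1)" if "s \<in> S j" "j \<le> d + 1" for s j
  proof (rule span_X[of "{1..<j}" U e "{1..<j - 1}" s, folded S_def])
    show "s \<in> S j" using that(1) .
    fix l assume l: "l \<in> {1..<j}"
    have "Xpow U 1 (e l) \<in> S l" using Xe' l that(2) by auto
    moreover have "S l \<subseteq> S (j - 1)" unfolding S_def using l by (intro vec.span_mono image_mono) auto
    ultimately show "Xpow U 1 (e l) \<in> S (j - 1)" by blast
  qed
  have claim: "k \<le> d - 1 \<Longrightarrow> Xpow U k (e d) - e (d - k) \<in> S (d - k)" for k
  proof (induction k)
    case 0 then show ?case by (simp add: S_def vec.span_zero)
  next
    case (Suc k)
    define s where "s = Xpow U k (e d) - e (d - k)"
    have sS: "s \<in> S (d - k)" using Suc by (simp add: s_def)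
    have "Xpow U (Suc k) (e d) - e (d - Suc k) = (Xpow U 1 (e (d - k)) - e (d - k - 1)) + Xpow U 1 s"
      by (simp add: s_def Xpow_plus[symmetric] Xpow_diff Xpow_add algebra_simps)
    moreover have "Xpow U 1 (e (d - k)) - e (d - k - 1) \<in> S (d - Suc k)"
      using Xe[of "d - k"] Suc.prems by simp
    moreover have "Xpow U 1 s \<in> S (d - Suc k)" using XS[OF sS] by simp
    ultimately show ?case unfolding S_def by (metis vec.span_add)
  qed
  have "Xpow U (d - 1) (e d) - e 1 \<in> S 1" using claim[of "d - 1"] d by simp
  then have top: "Xpow U (d - 1) (e d) = e 1" by (simp add: S_def)
  have "Xpow U d (e d) = Xpow U 1 (Xpow U (d - 1) (e d))" using d by (simp add: Xpow_plus[symmetric])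
  then have "Xpow U d (e d) = 0" using top X1e by simp
  moreover have "bil B (Xpow U (d - 1) (e d)) (e d) = 1" using top g d by auto
  moreover have "e d \<in> W" using sp d by (auto intro: vec.span_base)
  ultimately show ?thesis by auto
qed

lemma sum_lessThan_add_split: "(\<Sum>i<a + b. f i) = (\<Sum>i<a. f i) + (\<Sum>i<b. f (a + i))"
  for f :: "nat \<Rightarrow> 'a::comm_monoid_add"
  by (induction b) (simp_all add: add.assoc)

lemma ex1_uniq: "\<exists>!x. P x \<Longrightarrow> P a \<Longrightarrow> P b \<Longrightarrow> a = b" by blast

lemma perp_fam_combine:
  assumes pp: "perp2 U B W A C" and fa: "perp_fam U B A t1 Ws1" and fc: "perp_fam U B C t2 Ws2"
    and symo: "\<forall>x\<in>C. \<forall>y\<in>A. bil B x y = 0"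
  shows "perp_fam U B W (t1 + t2) (\<lambda>i. if i < t1 then Ws1 i else Ws2 (i - t1))"
proof -
  define t where "t = t1 + t2"
  define Ws where "Ws = (\<lambda>i. if i < t1 then Ws1 i else Ws2 (i - t1))"
  have Asub: "vec.subspace A" and Csub: "vec.subspace C" using pp unfolding perp2_def submod_def by blast+
  have AC0: "A \<inter> C = {0}" and sumW: "{w + w' | w w'. w \<in> A \<and> w' \<in> C} = W"
    and orth: "\<forall>w\<in>A. \<forall>w'\<in>C. bil B w w' = 0" using pp unfolding perp2_def by blast+
  have AW: "A \<subseteq> W"
  proof
    fix x assume "x \<in> A" then have "x + 0 \<in> W" using sumW vec.subspace_0[OF Csub] by blast
    then show "x \<in> W" by simp
  qed
  have CW: "C \<subseteq> W"
  proof
    fix x assume "x \<in> C" then have "0 + x \<in> W" using sumW vec.subspace_0[OF Asub] by blast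
    then show "x \<in> W" by simp
  qed
  note fa' = fa[unfolded perp_fam_def]
  note fa1 = conjunct1[OF fa'] and fa2 = conjunct1[OF conjunct2[OF fa']] and fa3 = conjunct2[OF conjunct2[OF fa']]
  note fc' = fc[unfolded perp_fam_def]
  note fc1 = conjunct1[OF fc'] and fc2 = conjunct1[OF conjunct2[OF fc']] and fc3 = conjunct2[OF conjunct2[OF fc']]
  have p1: "\<forall>i<t. submod U (Ws i) \<and> Ws i \<subseteq> W"
  proof (intro allI impI)
    fix i assume i: "i < t"
    show "submod U (Ws i) \<and> Ws i \<subseteq> W"
    proof (cases "i < t1")
      case True then show ?thesis using fa1 AW by (auto simp: Ws_def)
    next
      case False
      then have "i - t1 < t2" using i by (simp add: t_def)
      then show ?thesis using fc1 CW False by (auto simp: Ws_def)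
    qed
  qed
  have p2: "\<forall>i<t. \<forall>j<t. i \<noteq> j \<longrightarrow> (\<forall>x\<in>Ws i. \<forall>y\<in>Ws j. bil B x y = 0)"
  proof (intro allI impI ballI)
    fix i j x y assume i: "i < t" and j: "j < t" and ij: "i \<noteq> j" and x: "x \<in> Ws i" and y: "y \<in> Ws j"
    show "bil B x y = 0"
    proof (cases "i < t1")
      case True
      note iT = True
      show ?thesis
      proof (cases "j < t1")
        case True then show ?thesis using fa2 iT ij x y by (auto simp: Ws_def)
      next
        case False
        then have jj: "j - t1 < t2" using j by (simp add: t_def)
        have "x \<in> A" using x iT fa1 by (auto simp: Ws_def)
        moreover have "y \<in> C" using y False fc1 jj by (auto simp: Ws_def)
        ultimately have "x \<in> A" "y \<in> C" by auto
        then show ?thesis using orth by blast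
      qed
    next
      case False
      note iF = False
      show ?thesis
      proof (cases "j < t1")
        case True
        have ii: "i - t1 < t2" using i iF by (simp add: t_def)
        have "x \<in> C" using x iF fc1 ii by (auto simp: Ws_def)
        moreover have "y \<in> A" using y True fa1 by (auto simp: Ws_def)
        ultimately have "x \<in> C" "y \<in> A" by auto
        then show ?thesis using symo by blast
      next
        case False
        have "i - t1 < t2" "j - t1 < t2" "i - t1 \<noteq> j - t1" using i j iF False ij by (auto simp: t_def)
        then show ?thesis using fc2 iF False x y by (auto simp: Ws_def)
      qed
    qed
  qed
  define P where "P v w \<longleftrightarrow> (\<forall>i<t. w i \<in> Ws i) \<and> (\<forall>i. t \<le> i \<longrightarrow> w i = 0) \<and> v = (\<Sum>i<t. w i)" for v w
  have split: "(\<Sum>i<t. w i) = (\<Sum>i<t1. w i) + (\<Sum>i<t2. w (t1 + i))" for w :: "nat \<Rightarrow> 'a^'b"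
    unfolding t_def by (rule sum_lessThan_add_split)
  have p3: "\<exists>!w. P v w" if v: "v \<in> W" for v
  proof -
    obtain a c where a: "a \<in> A" and c: "c \<in> C" and vac: "v = a + c" using v sumW by blast
    obtain wa where wa: "(\<forall>i<t1. wa i \<in> Ws1 i) \<and> (\<forall>i. t1 \<le> i \<longrightarrow> wa i = 0) \<and> a = (\<Sum>i<t1. wa i)"
      using fa3 a by blast
    obtain wc where wc: "(\<forall>i<t2. wc i \<in> Ws2 i) \<and> (\<forall>i. t2 \<le> i \<longrightarrow> wc i = 0) \<and> c = (\<Sum>i<t2. wc i)"
      using fc3 c by blast
    define w where "w i = (if i < t1 then wa i else wc (i - t1))" for i
    have Pw: "P v w"
      unfolding P_def
    proof (intro conjI allI impI)
      show "\<And>i. i < t \<Longrightarrow> w i \<in> Ws i" using wa wc by (auto simp: w_def Ws_def t_def)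
      show "\<And>i. t \<le> i \<Longrightarrow> w i = 0" using wc by (auto simp: w_def t_def)
      have "(\<Sum>i<t1. w i) = a" using wa by (simp add: w_def)
      moreover have "(\<Sum>i<t2. w (t1 + i)) = c" using wc by (simp add: w_def)
      ultimately show "v = (\<Sum>i<t. w i)" using vac split by simp
    qed
    moreover have "w' = w" if Pw': "P v w'" for w'
    proof -
      have decomp: "\<exists>a' c'. a' \<in> A \<and> c' \<in> C \<and> v = a' + c'
          \<and> (\<forall>i<t1. u i \<in> Ws1 i) \<and> a' = (\<Sum>i<t1. u i)
          \<and> (\<forall>i<t2. u (t1 + i) \<in> Ws2 i) \<and> c' = (\<Sum>i<t2. u (t1 + i))" if Pu: "P v u" for u
      proof -
        have u1: "\<forall>i<t1. u i \<in> Ws1 i"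
        proof (intro allI impI)
          fix i assume "i < t1"
          then have "u i \<in> Ws i" using Pu unfolding P_def t_def by auto
          then show "u i \<in> Ws1 i" using \<open>i < t1\<close> by (simp add: Ws_def)
        qed
        have u2: "\<forall>i<t2. u (t1 + i) \<in> Ws2 i"
        proof (intro allI impI)
          fix i assume "i < t2"
          then have "u (t1 + i) \<in> Ws (t1 + i)" using Pu unfolding P_def t_def by auto
          then show "u (t1 + i) \<in> Ws2 i" by (simp add: Ws_def)
        qed
        have "(\<Sum>i<t1. u i) \<in> A" using u1 fa1 by (intro vec.subspace_sum[OF Asub]) auto
        moreover have "(\<Sum>i<t2. u (t1 + i)) \<in> C" using u2 fc1 by (intro vec.subspace_sum[OF Csub]) auto
        moreover have "v = (\<Sum>i<t1. u i) + (\<Sum>i<t2. u (t1 + i))" using Pu split unfolding P_def by simp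
        ultimately show ?thesis using u1 u2 by blast
      qed
      obtain a1 c1 where d1: "a1 \<in> A" "c1 \<in> C" "v = a1 + c1" "\<forall>i<t1. w i \<in> Ws1 i" "a1 = (\<Sum>i<t1. w i)"
        "\<forall>i<t2. w (t1 + i) \<in> Ws2 i" "c1 = (\<Sum>i<t2. w (t1 + i))" using decomp[OF Pw] by blast
      obtain a2 c2 where d2: "a2 \<in> A" "c2 \<in> C" "v = a2 + c2" "\<forall>i<t1. w' i \<in> Ws1 i" "a2 = (\<Sum>i<t1. w' i)"
        "\<forall>i<t2. w' (t1 + i) \<in> Ws2 i" "c2 = (\<Sum>i<t2. w' (t1 + i))" using decomp[OF Pw'] by blast
      have "a1 - a2 = c2 - c1" using d1(3) d2(3) by (simp add: algebra_simps)
      moreover have "a1 - a2 \<in> A" using d1 d2 vec.subspace_diff[OF Asub] by blast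
      moreover have "c2 - c1 \<in> C" using d1 d2 vec.subspace_diff[OF Csub] by blast
      ultimately have "a1 - a2 \<in> A \<inter> C" by simp
      then have aa: "a1 = a2" and cc: "c1 = c2" using AC0 d1(3) d2(3) by auto
      define wa1 where "wa1 i = (if i < t1 then w i else 0)" for i
      define wa2 where "wa2 i = (if i < t1 then w' i else 0)" for i
      have "wa1 = wa2"
      proof (rule ex1_uniq[OF fa3[rule_format, OF d1(1)]])
        show "(\<forall>i<t1. wa1 i \<in> Ws1 i) \<and> (\<forall>i. t1 \<le> i \<longrightarrow> wa1 i = 0) \<and> a1 = (\<Sum>i<t1. wa1 i)"
          using d1 by (simp add: wa1_def)
        show "(\<forall>i<t1. wa2 i \<in> Ws1 i) \<and> (\<forall>i. t1 \<le> i \<longrightarrow> wa2 i = 0) \<and> a1 = (\<Sum>i<t1. wa2 i)"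
          using d2 aa by (simp add: wa2_def)
      qed
      then have lowA: "\<forall>i<t1. w i = w' i" unfolding wa1_def wa2_def by (metis)
      define wc1 where "wc1 i = (if i < t2 then w (t1 + i) else 0)" for i
      define wc2 where "wc2 i = (if i < t2 then w' (t1 + i) else 0)" for i
      have "wc1 = wc2"
      proof (rule ex1_uniq[OF fc3[rule_format, OF d1(2)]])
        show "(\<forall>i<t2. wc1 i \<in> Ws2 i) \<and> (\<forall>i. t2 \<le> i \<longrightarrow> wc1 i = 0) \<and> c1 = (\<Sum>i<t2. wc1 i)"
          using d1 by (simp add: wc1_def)
        show "(\<forall>i<t2. wc2 i \<in> Ws2 i) \<and> (\<forall>i. t2 \<le> i \<longrightarrow> wc2 i = 0) \<and> c1 = (\<Sum>i<t2. wc2 i)"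
          using d2 cc by (simp add: wc2_def)
      qed
      then have lowC: "\<forall>i<t2. w (t1 + i) = w' (t1 + i)" unfolding wc1_def wc2_def by (metis)
      show "w' = w"
      proof
        fix i
        show "w' i = w i"
        proof (cases "i < t1")
          case True then show ?thesis using lowA by simp
        next
          case False
          show ?thesis
          proof (cases "i < t")
            case True
            then have "i - t1 < t2" using False by (simp add: t_def)
            then show ?thesis using lowC[rule_format, of "i - t1"] False by simp
          next
            case False
            then show ?thesis using Pw Pw' unfolding P_def by simp
          qed
        qed
      qed
    qed
    ultimately show ?thesis by blast
  qed
  have "perp_fam U B W t Ws"
    unfolding perp_fam_def
  proof (intro conjI)
    show "\<forall>i<t. submod U (Ws i) \<and> Ws i \<subseteq> W" by (rule p1)
    show "\<forall>i<t. \<forall>j<t. i \<noteq> j \<longrightarrow> (\<forall>x\<in>Ws i. \<forall>y\<in>Ws j. bil B x y = 0)" by (rule p2)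
    show "\<forall>v\<in>W. \<exists>!w. (\<forall>i<t. w i \<in> Ws i) \<and> (\<forall>i. t \<le> i \<longrightarrow> w i = 0) \<and> v = (\<Sum>i<t. w i)"
    proof (intro ballI)
      fix v assume "v \<in> W"
      then have "\<exists>!w. P v w" by (rule p3)
      then show "\<exists>!w. (\<forall>i<t. w i \<in> Ws i) \<and> (\<forall>i. t \<le> i \<longrightarrow> w i = 0) \<and> v = (\<Sum>i<t. w i)"
        by (simp only: P_def)
    qed
  qed
  then show ?thesis by (simp add: Ws_def t_def)
qed

lemma submod_Xpow: assumes "submod U W" "w \<in> W" shows "Xpow U k w \<in> W"
  using assms by (induction k) (auto simp: Xpow_Suc submod_def vec.subspace_diff)

context ctx begin

lemma sub_ctx: assumes "submod U W" "W \<subseteq> V" shows "ctx U B W N"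
proof (unfold_locales)
  show "CHAR('k) = 2" by (rule char2)
  show "vec.subspace W" using assms(1) submod_def by blast
  show "\<And>w. w \<in> W \<Longrightarrow> U *v w \<in> W" using assms(1) submod_def by blast
  show "\<And>w. w \<in> W \<Longrightarrow> Uit U N w = w" using assms(2) Nper by blast
  show "0 < N" by (rule Npos)
  show "\<And>x y. x \<in> W \<Longrightarrow> y \<in> W \<Longrightarrow> bil B (U *v x) (U *v y) = bil B x y" using assms(2) binv by blast
  show "\<And>v. v \<in> W \<Longrightarrow> bil B v v = 0" using assms(2) balt by blast
qed

lemma perp2_sub: assumes "perp2 U B W A C" shows "A \<subseteq> W" "C \<subseteq> W"
proof -
  have Asub: "vec.subspace A" and Csub: "vec.subspace C" using assms unfolding perp2_def submod_def by blast+
  have sumW: "{w + w' | w w'. w \<in> A \<and> w' \<in> C} = W" using assms unfolding perp2_def by blast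
  show "A \<subseteq> W"
  proof
    fix x assume "x \<in> A" then have "x + 0 \<in> W" using sumW vec.subspace_0[OF Csub] by blast
    then show "x \<in> W" by simp
  qed
  show "C \<subseteq> W"
  proof
    fix x assume "x \<in> C" then have "0 + x \<in> W" using sumW vec.subspace_0[OF Asub] by blast
    then show "x \<in> W" by simp
  qed
qed

lemma decomp_exists: "submod U W \<Longrightarrow> W \<subseteq> V \<Longrightarrow> \<exists>t Ws. perp_fam U B W t Ws \<and> (\<forall>i<t. orth_indec U B (Ws i))"
proof (induction "vec.dim W" arbitrary: W rule: less_induct)
  case less
  have Wsub: "vec.subspace W" using less.prems submod_def by blast
  show ?case
  proof (cases "W = {0}")
    case True
    have "perp_fam U B W 0 (\<lambda>_. {})"
      unfolding perp_fam_def
    proof (intro conjI ballI)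
      fix v assume "v \<in> W"
      then have v0: "v = 0" using True by simp
      show "\<exists>!w::nat \<Rightarrow> 'k^'n. (\<forall>i<0::nat. w i \<in> {}) \<and> (\<forall>i. (0::nat) \<le> i \<longrightarrow> w i = 0) \<and> v = (\<Sum>i<0. w i)"
        by (intro ex1I[of _ "\<lambda>_. 0"]) (simp_all add: v0 fun_eq_iff)
    qed auto
    then show ?thesis by blast
  next
    case False
    show ?thesis
    proof (cases "orth_indec U B W")
      case True
      have "perp_fam U B W 1 (\<lambda>_. W)"
        unfolding perp_fam_def
      proof (intro conjI ballI)
        show "\<forall>i<1::nat. submod U W \<and> W \<subseteq> W" using less.prems by simp
        show "\<forall>i<1::nat. \<forall>j<1::nat. i \<noteq> j \<longrightarrow> (\<forall>x\<in>W. \<forall>y\<in>W. bil B x y = 0)" by auto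
        fix v assume v: "v \<in> W"
        show "\<exists>!w::nat \<Rightarrow> 'k^'n. (\<forall>i<1::nat. w i \<in> W) \<and> (\<forall>i. (1::nat) \<le> i \<longrightarrow> w i = 0) \<and> v = (\<Sum>i<(1::nat). w i)"
        proof (rule ex1I[of _ "\<lambda>i. if i = 0 then v else 0"])
          show "(\<forall>i<1::nat. (if i = 0 then v else 0) \<in> W) \<and> (\<forall>i. (1::nat) \<le> i \<longrightarrow> (if i = 0 then v else 0) = 0)
              \<and> v = (\<Sum>i<(1::nat). if i = 0 then v else 0)" using v by simp
          fix w assume w: "(\<forall>i<1::nat. w i \<in> W) \<and> (\<forall>i. (1::nat) \<le> i \<longrightarrow> w i = 0) \<and> v = (\<Sum>i<(1::nat). w i)"
          show "w = (\<lambda>i. if i = 0 then v else 0)"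
          proof
            fix i show "w i = (if i = 0 then v else 0)" using w by (cases "i = 0") auto
          qed
        qed
      qed
      then show ?thesis using True by (intro exI[of _ 1] exI[of _ "\<lambda>_. W"]) simp
    next
      case False2: False
      then obtain A C where pp: "perp2 U B W A C" and A0: "A \<noteq> {0}" and C0: "C \<noteq> {0}"
        using False unfolding orth_indec_def by blast
      have smA: "submod U A" and smC: "submod U C" and AC0: "A \<inter> C = {0}"
        and orth: "\<forall>w\<in>A. \<forall>w'\<in>C. bil B w w' = 0" using pp unfolding perp2_def by blast+
      have Asub: "vec.subspace A" and Csub: "vec.subspace C" using smA smC submod_def by blast+
      have AW: "A \<subseteq> W" and CW: "C \<subseteq> W" using perp2_sub[OF pp] by auto
      have AV: "A \<subseteq> V" and CV: "C \<subseteq> V" using AW CW less.prems by auto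
      have dA: "vec.dim A < vec.dim W"
      proof (rule vec.dim_psubset)
        have "A \<noteq> W"
        proof
          assume "A = W"
          then have "C \<subseteq> A \<inter> C" using CW by blast
          then have "C \<subseteq> {0}" using AC0 by simp
          then show False using C0 vec.subspace_0[OF Csub] by blast
        qed
        then show "vec.span A \<subset> vec.span W" using AW Asub Wsub by (simp add: vec.span_eq_iff[THEN iffD2] psubset_eq)
      qed
      have dC: "vec.dim C < vec.dim W"
      proof (rule vec.dim_psubset)
        have "C \<noteq> W"
        proof
          assume "C = W"
          then have "A \<subseteq> A \<inter> C" using AW by blast
          then have "A \<subseteq> {0}" using AC0 by simp
          then show False using A0 vec.subspace_0[OF Asub] by blast
        qed
        then show "vec.span C \<subset> vec.span W" using CW Csub Wsub by (simp add: vec.span_eq_iff[THEN iffD2] psubset_eq)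
      qed
      obtain t1 Ws1 where f1: "perp_fam U B A t1 Ws1" and o1: "\<forall>i<t1. orth_indec U B (Ws1 i)"
        using less.hyps[OF dA smA AV] by blast
      obtain t2 Ws2 where f2: "perp_fam U B C t2 Ws2" and o2: "\<forall>i<t2. orth_indec U B (Ws2 i)"
        using less.hyps[OF dC smC CV] by blast
      have symo: "\<forall>x\<in>C. \<forall>y\<in>A. bil B x y = 0"
      proof (intro ballI)
        fix x y assume "x \<in> C" "y \<in> A"
        then have "bil B y x = 0" using orth by blast
        then show "bil B x y = 0" using bsym \<open>x \<in> C\<close> \<open>y \<in> A\<close> AV CV by (metis subsetD)
      qed
      have "perp_fam U B W (t1 + t2) (\<lambda>i. if i < t1 then Ws1 i else Ws2 (i - t1))"
        by (rule perp_fam_combine[OF pp f1 f2 symo])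
      moreover have "\<forall>i<t1 + t2. orth_indec U B (if i < t1 then Ws1 i else Ws2 (i - t1))"
      proof (intro allI impI)
        fix i assume i: "i < t1 + t2"
        show "orth_indec U B (if i < t1 then Ws1 i else Ws2 (i - t1))"
        proof (cases "i < t1")
          case True then show ?thesis using o1 by simp
        next
          case False
          then have "i - t1 < t2" using i by simp
          then show ?thesis using o2 False by simp
        qed
      qed
      ultimately show ?thesis by blast
    qed
  qed
qed

lemma isVd_nz: assumes "isVd U B W d" "d > 0" shows "W \<noteq> {0}"
proof -
  obtain e where ind: "vec.independent (e ` {1..d})" and sp: "vec.span (e ` {1..d}) = W"
    using assms(1) unfolding isVd_def by blast
  have e1: "e 1 \<in> e ` {1..d}" using assms(2) by simp
  then have "e 1 \<noteq> 0" using ind vec.dependent_zero by metis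
  moreover have "e 1 \<in> W" using e1 sp vec.span_base by metis
  ultimately show ?thesis by blast
qed

lemma ii_iii:
  assumes d: "d > 0" and ex: "\<exists>W W'. perp2 U B V W W' \<and> isVd U B W d"
    and pf: "perp_fam U B V t Ws" and oi: "\<forall>i<t. orth_indec U B (Ws i)"
  shows "\<exists>i<t. isVd U B (Ws i) d"
proof -
  obtain W W' where pW: "perp2 U B V W W'" and iv: "isVd U B W d" using ex by blast
  have WV: "W \<subseteq> V" using perp2_sub[OF pW] by auto
  obtain v where vW: "v \<in> W" and vX: "Xpow U d v = 0" and nz: "bil B (Xpow U (d - 1) v) v \<noteq> 0"
    using ii_to_i[OF iv d] by blast
  have vV: "v \<in> V" using vW WV by blast
  note pf' = pf[unfolded perp_fam_def]
  note pf1 = conjunct1[OF pf'] and pf2 = conjunct1[OF conjunct2[OF pf']] and pf3 = conjunct2[OF conjunct2[OF pf']]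
  obtain w where w: "(\<forall>i<t. w i \<in> Ws i) \<and> (\<forall>i. t \<le> i \<longrightarrow> w i = 0) \<and> v = (\<Sum>i<t. w i)"
    using pf3 vV by blast
  have wX: "Xpow U d (w i) = 0" for i
  proof -
    have "(\<lambda>i. Xpow U d (w i)) = (\<lambda>i. 0)"
    proof (rule ex1_uniq[OF pf3[rule_format, OF V0]])
      show "(\<forall>i<t. Xpow U d (w i) \<in> Ws i) \<and> (\<forall>i. t \<le> i \<longrightarrow> Xpow U d (w i) = 0) \<and> 0 = (\<Sum>i<t. Xpow U d (w i))"
        using w pf1 vX by (auto simp: submod_Xpow Xpow_sum[symmetric])
      show "(\<forall>i<t. (0::'k^'n) \<in> Ws i) \<and> (\<forall>i. t \<le> i \<longrightarrow> (0::'k^'n) = 0) \<and> 0 = (\<Sum>i<t. (0::'k^'n))"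
        using pf1 by (auto simp: submod_def vec.subspace_0)
    qed
    then show ?thesis by (metis (mono_tags))
  qed
  have expand: "bil B (Xpow U (d - 1) v) v = (\<Sum>i<t. bil B (Xpow U (d - 1) (w i)) (w i))"
  proof -
    have "bil B (Xpow U (d - 1) v) v = (\<Sum>i<t. \<Sum>j<t. bil B (Xpow U (d - 1) (w j)) (w i))"
      using w by (simp add: Xpow_sum bil_sum1 bil_sum2)
    also have "\<dots> = (\<Sum>i<t. \<Sum>j<t. bil B (Xpow U (d - 1) (w i)) (w j))"
      by (rule sum.swap)
    also have "\<dots> = (\<Sum>i<t. bil B (Xpow U (d - 1) (w i)) (w i))"
    proof (rule sum.cong[OF refl])
      fix i assume i: "i \<in> {..<t}"
      have "(\<Sum>j<t. bil B (Xpow U (d - 1) (w i)) (w j)) = bil B (Xpow U (d - 1) (w i)) (w i)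
          + (\<Sum>j\<in>{..<t} - {i}. bil B (Xpow U (d - 1) (w i)) (w j))"
        using i by (simp add: sum.remove)
      also have "(\<Sum>j\<in>{..<t} - {i}. bil B (Xpow U (d - 1) (w i)) (w j)) = 0"
      proof (rule sum.neutral, rule ballI)
        fix j assume j: "j \<in> {..<t} - {i}"
        have "submod U (Ws i)" "w i \<in> Ws i" using w pf1 i by auto
        then have "Xpow U (d - 1) (w i) \<in> Ws i" by (rule submod_Xpow)
        moreover have "w j \<in> Ws j" using w j by auto
        ultimately show "bil B (Xpow U (d - 1) (w i)) (w j) = 0" using pf2 i j by auto
      qed
      finally show "(\<Sum>j<t. bil B (Xpow U (d - 1) (w i)) (w j)) = bil B (Xpow U (d - 1) (w i)) (w i)" by simp
    qed
    finally show ?thesis .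
  qed
  obtain i where it: "i < t" and nzi: "bil B (Xpow U (d - 1) (w i)) (w i) \<noteq> 0"
  proof -
    have "\<exists>i\<in>{..<t}. bil B (Xpow U (d - 1) (w i)) (w i) \<noteq> 0"
    proof (rule ccontr)
      assume "\<not> ?thesis"
      then have "(\<Sum>i<t. bil B (Xpow U (d - 1) (w i)) (w i)) = 0" by (intro sum.neutral) auto
      then show False using nz expand by simp
    qed
    then show ?thesis using that by blast
  qed
  have smi: "submod U (Ws i)" and WiV: "Ws i \<subseteq> V" using pf1 it by auto
  interpret ci: ctx U B "Ws i" N by (rule sub_ctx[OF smi WiV])
  have wi: "w i \<in> Ws i" using w it by blast
  obtain A C where pAC: "perp2 U B (Ws i) A C" and ivA: "isVd U B A d"
    using ci.i_to_ii[OF wi d wX nzi] by blast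
  have A0: "A \<noteq> {0}" using isVd_nz[OF ivA d] .
  have "C = {0}" using oi it pAC A0 unfolding orth_indec_def by blast
  then have "Ws i = A" using pAC unfolding perp2_def by auto
  then show ?thesis using ivA it by blast
qed

lemma iii_ii:
  assumes d: "d > 0"
    and h: "\<forall>t Ws. perp_fam U B V t Ws \<and> (\<forall>i<t. orth_indec U B (Ws i)) \<longrightarrow> (\<exists>i<t. isVd U B (Ws i) d)"
  shows "\<exists>W W'. perp2 U B V W W' \<and> isVd U B W d"
proof -
  have "submod U V" using Vsub Vinv by (simp add: submod_def)
  then obtain t Ws where pf: "perp_fam U B V t Ws" and oi: "\<forall>i<t. orth_indec U B (Ws i)"
    using decomp_exists by blast
  obtain i where it: "i < t" and iv: "isVd U B (Ws i) d" using h pf oi by blast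
  have WiV: "Ws i \<subseteq> V" using pf it unfolding perp_fam_def by blast
  obtain e where sp: "vec.span (e ` {1..d}) = Ws i"
    and r1: "U *v e 1 = e 1"
    and r2: "\<forall>i. 2 \<le> i \<and> i \<le> d div 2 + 1 \<longrightarrow> U *v e i = (\<Sum>j=1..i. e j)"
    and r3: "\<forall>i. d div 2 + 1 < i \<and> i \<le> d \<longrightarrow> U *v e i = e i + e (i - 1)"
    and g: "\<forall>i\<in>{1..d}. \<forall>j\<in>{1..d}. bil B (e i) (e j) = (if i + j = d + 1 then 1 else 0)"
    using iv unfolding isVd_def by blast
  have eV: "e j \<in> V" if "j \<in> {1..d}" for j
    using that sp WiV vec.span_base[of "e j" "e ` {1..d}"] by blast
  show ?thesis by (rule partB[OF d eV r1 r2 r3 g])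
qed

end

theorem lemma6p6:
  fixes U B :: "'k::alg_closed_field^'n^'n" and V :: "('k^'n) set" and d \<alpha> :: nat
  assumes char2: "CHAR('k) = 2"
    and Vmod: "submod U V"
    and uorder: "\<forall>v\<in>V. (((*v) U) ^^ (2 ^ \<alpha>)) v = v"
    and binv: "\<forall>x\<in>V. \<forall>y\<in>V. bil B (U *v x) (U *v y) = bil B x y"
    and balt: "\<forall>v\<in>V. bil B v v = 0"
    and dpos: "d > 0"
  shows "((\<exists>v\<in>V. Xpow U d v = 0 \<and> bil B (Xpow U (d - 1) v) v \<noteq> 0)
           \<longleftrightarrow> (even d \<and> (\<exists>W W'. perp2 U B V W W' \<and> isVd U B W d)))
       \<and> ((even d \<and> (\<exists>W W'. perp2 U B V W W' \<and> isVd U B W d))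
           \<longleftrightarrow> (even d \<and> (\<forall>t Ws. perp_fam U B V t Ws \<and> (\<forall>i<t. orth_indec U B (Ws i))
                   \<longrightarrow> (\<exists>i<t. isVd U B (Ws i) d))))"
proof -
  interpret c: ctx U B V "2 ^ \<alpha>"
  proof (unfold_locales)
    show "CHAR('k) = 2" by (rule char2)
    show "vec.subspace V" using Vmod submod_def by blast
    show "\<And>w. w \<in> V \<Longrightarrow> U *v w \<in> V" using Vmod submod_def by blast
    show "\<And>w. w \<in> V \<Longrightarrow> Uit U (2 ^ \<alpha>) w = w" using uorder by (simp add: Uit_def)
    show "0 < (2::nat) ^ \<alpha>" by simp
    show "\<And>x y. x \<in> V \<Longrightarrow> y \<in> V \<Longrightarrow> bil B (U *v x) (U *v y) = bil B x y" using binv by blast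
    show "\<And>v. v \<in> V \<Longrightarrow> bil B v v = 0" using balt by blast
  qed
  have P1: "(\<exists>v\<in>V. Xpow U d v = 0 \<and> bil B (Xpow U (d - 1) v) v \<noteq> 0)
           \<longleftrightarrow> (even d \<and> (\<exists>W W'. perp2 U B V W W' \<and> isVd U B W d))"
  proof
    assume "\<exists>v\<in>V. Xpow U d v = 0 \<and> bil B (Xpow U (d - 1) v) v \<noteq> 0"
    then obtain v where "v \<in> V" "Xpow U d v = 0" "bil B (Xpow U (d - 1) v) v \<noteq> 0" by blast
    then show "even d \<and> (\<exists>W W'. perp2 U B V W W' \<and> isVd U B W d)"
      using c.i_to_ii dpos by blast
  next
    assume "even d \<and> (\<exists>W W'. perp2 U B V W W' \<and> isVd U B W d)"
    then obtain W W' where p: "perp2 U B V W W'" and iv: "isVd U B W d" by blast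
    have "W \<subseteq> V" using c.perp2_sub[OF p] by blast
    then show "\<exists>v\<in>V. Xpow U d v = 0 \<and> bil B (Xpow U (d - 1) v) v \<noteq> 0"
      using ii_to_i[OF iv dpos] by blast
  qed
  have P2: "(even d \<and> (\<exists>W W'. perp2 U B V W W' \<and> isVd U B W d))
           \<longleftrightarrow> (even d \<and> (\<forall>t Ws. perp_fam U B V t Ws \<and> (\<forall>i<t. orth_indec U B (Ws i))
                   \<longrightarrow> (\<exists>i<t. isVd U B (Ws i) d)))"
  proof
    assume h: "even d \<and> (\<exists>W W'. perp2 U B V W W' \<and> isVd U B W d)"
    show "even d \<and> (\<forall>t Ws. perp_fam U B V t Ws \<and> (\<forall>i<t. orth_indec U B (Ws i))
                   \<longrightarrow> (\<exists>i<t. isVd U B (Ws i) d))"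
      using h c.ii_iii[OF dpos] by blast
  next
    assume h: "even d \<and> (\<forall>t Ws. perp_fam U B V t Ws \<and> (\<forall>i<t. orth_indec U B (Ws i))
                   \<longrightarrow> (\<exists>i<t. isVd U B (Ws i) d))"
    then show "even d \<and> (\<exists>W W'. perp2 U B V W W' \<and> isVd U B W d)"
      using c.iii_ii[OF dpos] by blast
  qed
  show ?thesis using P1 P2 by blast
qed

end
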